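(* Let $H$ be the graph consisting of two vertex-disjoint triangles $v_1v_2v_3$ and $w_1w_2w_3$ together with the edge $v_3w_1$. Let $n\ge 7$ and let $G$ be a graph with $n$ vertices obtained from $H$ by attaching $n-6$ pendant edges (new leaves) to vertices of $H$, such that both $v_3$ and $w_1$ are incident with at least one pendant edge. Then $\operatorname{avm}(G)>\operatorname{avm}(T_n^1(3,3))$.
   Context: $\operatorname{avm}(G)$ is the average of $|M|$ over all maximal matchings $M$ of $G$ (a matching is maximal if not properly contained in another matching). $T_n^1(3,3)$ is the graph obtained from $H$ by attaching $n-6$ pendant edges (new leaves) to $v_3$. *)

theory Defs
  imports Complex_Main
begin

text \<open>A simple graph is represented by its edge set: a set of 2-element vertex sets.\<close>

definition is_matching :: "'a set set \<Rightarrow> 'a set set \<Rightarrow> bool" where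
  "is_matching E M \<longleftrightarrow> M \<subseteq> E \<and> (\<forall>e\<in>M. \<forall>e'\<in>M. e \<noteq> e' \<longrightarrow> e \<inter> e' = {})"

definition is_maximal_matching :: "'a set set \<Rightarrow> 'a set set \<Rightarrow> bool" where
  "is_maximal_matching E M \<longleftrightarrow> is_matching E M \<and> \<not> (\<exists>M'. is_matching E M' \<and> M \<subset> M')"

definition maximal_matchings :: "'a set set \<Rightarrow> 'a set set set" where
  "maximal_matchings E = {M. is_maximal_matching E M}"

definition avm :: "'a set set \<Rightarrow> real" where
  "avm E = (\<Sum>M\<in>maximal_matchings E. real (card M)) / real (card (maximal_matchings E))"

text \<open>H: triangles v1 v2 v3 = 0 1 2 and w1 w2 w3 = 3 4 5, plus the edge v3 w1 = {2,3}.\<close>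
definition H_edges :: "nat set set" where
  "H_edges = {{0,1},{1,2},{0,2},{3,4},{4,5},{3,5},{2,3}}"

definition pendant_graph :: "nat \<Rightarrow> (nat \<Rightarrow> nat) \<Rightarrow> nat set set" where
  "pendant_graph n f = H_edges \<union> {{i, f i} | i. i \<in> {6..<n}}"

text \<open>T_n^1(3,3): all n-6 pendant edges attached to v3 (= vertex 2).\<close>
definition T1_33 :: "nat \<Rightarrow> nat set set" where
  "T1_33 n = pendant_graph n (\<lambda>_. 2)"

end

theory Submission
  imports Defs "HOL-Library.FuncSet"
begin

lemma H_mem: "e \<in> H_edges \<longleftrightarrow> e = {0,1} \<or> e = {1,2} \<or> e = {0,2} \<or> e = {3,4} \<or> e = {4,5} \<or> e = {3,5} \<or> e = {2,3}"
  unfolding H_edges_def by simp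

lemma H_small: "e \<in> H_edges \<Longrightarrow> x \<in> e \<Longrightarrow> x < 6"
  unfolding H_mem by auto

lemma H_ne: "e \<in> H_edges \<Longrightarrow> e \<noteq> {}"
  unfolding H_mem by auto

lemma add_edge_contra:
  assumes "is_maximal_matching E M" "e \<in> E" "e \<noteq> {}" "\<forall>e'\<in>M. e \<inter> e' = {}"
  shows False
proof -
  have m: "is_matching E M" and mx: "\<not> (\<exists>M'. is_matching E M' \<and> M \<subset> M')"
    using assms(1) unfolding is_maximal_matching_def by auto
  have "e \<notin> M" using assms(3,4) by auto
  have "is_matching E (insert e M)"
    using m assms(2,4) unfolding is_matching_def by (auto simp: Int_commute)
  moreover have "M \<subset> insert e M" using \<open>e \<notin> M\<close> by auto
  ultimately show False using mx by blast
qed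

definition Lf :: "nat \<Rightarrow> (nat \<Rightarrow> nat) \<Rightarrow> nat \<Rightarrow> nat set" where
  "Lf n f j = {i \<in> {6..<n}. f i = j}"

definition Uset :: "nat \<Rightarrow> (nat \<Rightarrow> nat) \<Rightarrow> nat set set \<Rightarrow> nat set" where
  "Uset n f N = {j \<in> {0..<6}. j \<notin> \<Union>N \<and> Lf n f j \<noteq> {}}"

definition validL :: "nat \<Rightarrow> (nat \<Rightarrow> nat) \<Rightarrow> nat set set \<Rightarrow> bool" where
  "validL n f N = (\<forall>e\<in>H_edges. e \<inter> \<Union>N = {} \<longrightarrow> (\<exists>j\<in>e. Lf n f j \<noteq> {}))"

definition build :: "nat set set \<Rightarrow> nat set \<Rightarrow> (nat \<Rightarrow> nat) \<Rightarrow> nat set set" where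
  "build N U g = N \<union> (\<lambda>j. {g j, j}) ` U"

lemma E_cases:
  assumes "e \<in> pendant_graph n f"
  obtains "e \<in> H_edges" | i where "6 \<le> i" "i < n" "e = {i, f i}"
  using assms unfolding pendant_graph_def by auto

context
  fixes n :: nat and f :: "nat \<Rightarrow> nat"
  assumes fr: "\<forall>i\<in>{6..<n}. f i < 6"
begin

lemma char_sub:
  assumes M: "is_maximal_matching (pendant_graph n f) M"
  defines "N \<equiv> M \<inter> H_edges"
  shows "is_matching H_edges N \<and> validL n f N \<and>
    (\<exists>g \<in> PiE (Uset n f N) (Lf n f). M = build N (Uset n f N) g)"
proof -
  let ?E = "pendant_graph n f"
  have mat: "is_matching ?E M" using M unfolding is_maximal_matching_def by auto
  have sub: "M \<subseteq> ?E" and dj: "\<And>e e'. e \<in> M \<Longrightarrow> e' \<in> M \<Longrightarrow> e \<noteq> e' \<Longrightarrow> e \<inter> e' = {}"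
    using mat unfolding is_matching_def by auto
  have NM: "is_matching H_edges N" using mat unfolding is_matching_def N_def by auto
  have leafuniq: "i = i'" if "{i, j} \<in> M" "{i', j} \<in> M" "6 \<le> i" "6 \<le> i'" "j < 6" for i i' j
  proof (rule ccontr)
    assume "i \<noteq> i'"
    hence "{i, j} \<noteq> {i', j}" using that by (auto simp: doubleton_eq_iff)
    from dj[OF that(1,2) this] show False by auto
  qed
  have valid: "validL n f N"
    unfolding validL_def
  proof (intro ballI impI, rule ccontr)
    fix e assume eH: "e \<in> H_edges" and eN: "e \<inter> \<Union>N = {}" and nl: "\<not> (\<exists>j\<in>e. Lf n f j \<noteq> {})"
    have "\<forall>e'\<in>M. e \<inter> e' = {}"
    proof
      fix e' assume e'M: "e' \<in> M"
      then have "e' \<in> ?E" using sub by auto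
      then show "e \<inter> e' = {}"
      proof (cases rule: E_cases)
        case 1 then have "e' \<in> N" using e'M N_def by auto
        then show ?thesis using eN by auto
      next
        case (2 i)
        have "i \<notin> e" using H_small[OF eH] 2 by force
        moreover have "f i \<notin> e"
        proof
          assume "f i \<in> e"
          then have "i \<in> Lf n f (f i)" using 2 unfolding Lf_def by auto
          then show False using nl \<open>f i \<in> e\<close> by auto
        qed
        ultimately show ?thesis using 2 by auto
      qed
    qed
    moreover have "e \<in> ?E" using eH unfolding pendant_graph_def by auto
    ultimately show False using add_edge_contra[OF M _ H_ne[OF eH]] by blast
  qed
  define U where "U = Uset n f N"
  have ex: "\<exists>i. i \<in> Lf n f j \<and> {i, j} \<in> M" if jU: "j \<in> U" for j
  proof (rule ccontr)
    assume nex: "\<not> ?thesis"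
    from jU have j6: "j < 6" and jN: "j \<notin> \<Union>N" and ne: "Lf n f j \<noteq> {}"
      unfolding U_def Uset_def by auto
    obtain i where iL: "i \<in> Lf n f j" using ne by auto
    then have i6: "6 \<le> i" "i < n" and fi: "f i = j" unfolding Lf_def by auto
    have "\<forall>e'\<in>M. {i, j} \<inter> e' = {}"
    proof
      fix e' assume e'M: "e' \<in> M"
      then have "e' \<in> ?E" using sub by auto
      then show "{i, j} \<inter> e' = {}"
      proof (cases rule: E_cases)
        case 1 then have "e' \<in> N" using e'M N_def by auto
        then have "j \<notin> e'" using jN by auto
        moreover have "i \<notin> e'" using H_small[OF 1] i6 by force
        ultimately show ?thesis by auto
      next
        case (2 i')
        have fi': "f i' < 6" using fr 2 by auto
        show ?thesis
        proof (rule ccontr)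
          assume "{i, j} \<inter> e' \<noteq> {}"
          then have "i = i' \<or> j = f i' \<or> j = i'" using 2 j6 fi i6 fi' by auto
          then have "j = f i'" using 2 fi j6 by auto
          then have "i' \<in> Lf n f j" using 2 unfolding Lf_def by auto
          then show False using nex e'M 2 \<open>j = f i'\<close> by (auto simp: insert_commute)
        qed
      qed
    qed
    moreover have "{i, j} \<in> ?E" using i6 fi unfolding pendant_graph_def by auto
    ultimately show False using add_edge_contra[OF M] by blast
  qed
  define g where "g = (\<lambda>j\<in>U. SOME i. i \<in> Lf n f j \<and> {i, j} \<in> M)"
  have gp: "g j \<in> Lf n f j \<and> {g j, j} \<in> M" if "j \<in> U" for j
    using someI_ex[OF ex[OF that]] that unfolding g_def by auto
  have gPi: "g \<in> PiE U (Lf n f)" using gp unfolding g_def by auto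
  have "M = build N U g"
  proof
    show "build N U g \<subseteq> M" unfolding build_def N_def using gp by auto
  next
    show "M \<subseteq> build N U g"
    proof
      fix e assume eM: "e \<in> M"
      then have "e \<in> ?E" using sub by auto
      then show "e \<in> build N U g"
      proof (cases rule: E_cases)
        case 1 then show ?thesis using eM unfolding build_def N_def by auto
      next
        case (2 i)
        define j where "j = f i"
        have j6: "j < 6" using fr 2 j_def by auto
        have jN: "j \<notin> \<Union>N"
        proof
          assume "j \<in> \<Union>N"
          then obtain e' where e'N: "e' \<in> N" "j \<in> e'" by auto
          have "e' \<noteq> e" using e'N H_small[of e' i] 2 unfolding N_def by force
          then have "e' \<inter> e = {}" using dj e'N eM unfolding N_def by auto
          then show False using e'N 2 j_def by auto
        qed
        have iL: "i \<in> Lf n f j" using 2 j_def unfolding Lf_def by auto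
        then have jU: "j \<in> U" using j6 jN unfolding U_def Uset_def by auto
        have "g j = i"
          using leafuniq[of "g j" j i] gp[OF jU] eM 2 j_def j6 unfolding Lf_def
          by (auto simp: insert_commute)
        then have "e = {g j, j}" using 2 j_def by auto
        then show ?thesis using jU unfolding build_def by auto
      qed
    qed
  qed
  then show ?thesis using NM valid gPi U_def by auto
qed


lemma build_inter_H:
  assumes "N \<subseteq> H_edges" "g \<in> PiE U (Lf n f)"
  shows "build N U g \<inter> H_edges = N"
proof -
  have "{g j, j} \<notin> H_edges" if "j \<in> U" for j
  proof
    assume "{g j, j} \<in> H_edges"
    then have "g j < 6" using H_small by auto
    moreover have "g j \<in> Lf n f j" using assms(2) that by auto
    ultimately show False unfolding Lf_def by auto
  qed
  then show ?thesis using assms(1) unfolding build_def by auto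
qed

lemma char_sup:
  assumes NM: "is_matching H_edges N" and valid: "validL n f N"
    and gPi: "g \<in> PiE (Uset n f N) (Lf n f)"
  shows "is_maximal_matching (pendant_graph n f) (build N (Uset n f N) g)"
proof -
  let ?E = "pendant_graph n f"
  let ?U = "Uset n f N"
  let ?M = "build N ?U g"
  have NH: "N \<subseteq> H_edges" and djN: "\<And>e e'. e \<in> N \<Longrightarrow> e' \<in> N \<Longrightarrow> e \<noteq> e' \<Longrightarrow> e \<inter> e' = {}"
    using NM unfolding is_matching_def by auto
  have gL: "6 \<le> g j \<and> g j < n \<and> f (g j) = j" if "j \<in> ?U" for j
    using gPi that unfolding Lf_def by auto
  have U6: "j < 6 \<and> j \<notin> \<Union>N \<and> Lf n f j \<noteq> {}" if "j \<in> ?U" for j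
    using that unfolding Uset_def by auto
  have Msub: "?M \<subseteq> ?E"
  proof
    fix e assume "e \<in> ?M"
    then consider "e \<in> N" | j where "j \<in> ?U" "e = {g j, j}" unfolding build_def by auto
    then show "e \<in> ?E"
    proof cases
      case 1 then show ?thesis using NH unfolding pendant_graph_def by auto
    next
      case 2 then show ?thesis using gL[OF 2(1)] unfolding pendant_graph_def by force
    qed
  qed
  have Mdj: "e \<inter> e' = {}" if "e \<in> ?M" "e' \<in> ?M" "e \<noteq> e'" for e e'
  proof -
    have leafN: "{g j, j} \<inter> e = {}" if "j \<in> ?U" "e \<in> N" for j e
    proof -
      have "g j \<notin> e" using H_small[of e "g j"] NH that gL[OF that(1)] by auto
      moreover have "j \<notin> e" using U6[OF that(1)] that(2) by auto
      ultimately show ?thesis by auto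
    qed
    have leafleaf: "{g j, j} \<inter> {g j', j'} = {}" if "j \<in> ?U" "j' \<in> ?U" "{g j, j} \<noteq> {g j', j'}" for j j'
    proof -
      have "j \<noteq> j'" using that by auto
      moreover then have "g j \<noteq> g j'" using gL[OF that(1)] gL[OF that(2)] by metis
      ultimately show ?thesis using gL[OF that(1)] gL[OF that(2)] U6[OF that(1)] U6[OF that(2)] by auto
    qed
    from that(1) consider "e \<in> N" | j where "j \<in> ?U" "e = {g j, j}" unfolding build_def by auto
    then show ?thesis
    proof cases
      case 1
      from that(2) consider "e' \<in> N" | j' where "j' \<in> ?U" "e' = {g j', j'}" unfolding build_def by auto
      then show ?thesis
      proof cases
        case 1 then show ?thesis using djN \<open>e \<in> N\<close> that(3) by blast
      next
        case 2 then show ?thesis using leafN[OF 2(1) \<open>e \<in> N\<close>] by blast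
      qed
    next
      case (2 j)
      from that(2) consider "e' \<in> N" | j' where "j' \<in> ?U" "e' = {g j', j'}" unfolding build_def by auto
      then show ?thesis
      proof cases
        case 1 then show ?thesis using leafN[OF \<open>j \<in> ?U\<close> 1] \<open>e = {g j, j}\<close> by blast
      next
        case (2 j') then show ?thesis using leafleaf[OF \<open>j \<in> ?U\<close> 2(1)] \<open>e = {g j, j}\<close> that(3) by blast
      qed
    qed
  qed
  have mat: "is_matching ?E ?M" using Msub Mdj unfolding is_matching_def by auto
  have nomax: False if M'm: "is_matching ?E M'" and sub: "?M \<subset> M'" for M'
  proof -
    obtain e where eM': "e \<in> M'" and eM: "e \<notin> ?M" using sub by auto
    have eE: "e \<in> ?E" using M'm eM' unfolding is_matching_def by auto
    have dis: "e \<inter> e' = {}" if "e' \<in> ?M" for e'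
    proof -
      have "e' \<in> M'" "e \<noteq> e'" using that sub eM by auto
      then show ?thesis using M'm eM' unfolding is_matching_def by blast
    qed
    from eE show False
    proof (cases rule: E_cases)
      case 1
      have "e \<inter> \<Union>N = {}"
      proof (rule ccontr)
        assume "e \<inter> \<Union>N \<noteq> {}"
        then obtain e' where "e' \<in> N" "e \<inter> e' \<noteq> {}" by auto
        then show False using dis unfolding build_def by auto
      qed
      moreover have "\<forall>e\<in>H_edges. e \<inter> \<Union>N = {} \<longrightarrow> (\<exists>j\<in>e. Lf n f j \<noteq> {})"
        using valid unfolding validL_def by simp
      ultimately obtain j where je: "j \<in> e" and jL: "Lf n f j \<noteq> {}" using 1 by blast
      have "j \<in> ?U" using je jL H_small[OF 1 je] \<open>e \<inter> \<Union>N = {}\<close> unfolding Uset_def by auto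
      then have "{g j, j} \<in> ?M" unfolding build_def by auto
      then show False using dis je by auto
    next
      case (2 i)
      define j where "j = f i"
      show False
      proof (cases "j \<in> \<Union>N")
        case True
        then obtain e' where "e' \<in> N" "j \<in> e'" by auto
        then show False using dis[of e'] 2 j_def unfolding build_def by auto
      next
        case False
        have "i \<in> Lf n f j" using 2 j_def unfolding Lf_def by auto
        then have "j \<in> ?U" using False fr 2 j_def unfolding Uset_def by auto
        then have "{g j, j} \<in> ?M" unfolding build_def by auto
        then show False using dis 2 j_def by auto
      qed
    qed
  qed
  show ?thesis unfolding is_maximal_matching_def using mat nomax by blast
qed

lemma build_inj:
  assumes "g \<in> PiE U (Lf n f)" "g' \<in> PiE U (Lf n f)" "build N U g = build N U g'"
    "N \<subseteq> H_edges" "U \<subseteq> {0..<6}"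
  shows "g = g'"
proof (rule PiE_ext[OF assms(1,2)])
  fix j assume jU: "j \<in> U"
  have gj: "6 \<le> g j \<and> f (g j) = j" using assms(1) jU unfolding Lf_def by auto
  have "{g j, j} \<in> build N U g'" using assms(3) jU unfolding build_def by auto
  moreover have "{g j, j} \<notin> N" using gj assms(4) H_small by fastforce
  ultimately obtain j' where j'U: "j' \<in> U" and eq: "{g j, j} = {g' j', j'}" unfolding build_def by auto
  have gj': "6 \<le> g' j' \<and> f (g' j') = j'" using assms(2) j'U unfolding Lf_def by auto
  have "j < 6" "j' < 6" using jU j'U assms(5) by auto
  then have "g j = g' j' \<and> j = j'" using eq gj gj' by (auto simp: doubleton_eq_iff)
  then show "g j = g' j" by auto
qed

lemma card_build:
  assumes "g \<in> PiE U (Lf n f)" "N \<subseteq> H_edges" "finite N" "U \<subseteq> {0..<6}"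
  shows "card (build N U g) = card N + card U"
proof -
  have fU: "finite U" using assms(4) finite_subset by auto
  have inj: "inj_on (\<lambda>j. {g j, j}) U"
  proof (rule inj_onI)
    fix j j' assume "j \<in> U" "j' \<in> U" "{g j, j} = {g j', j'}"
    moreover then have "6 \<le> g j" "6 \<le> g j'" "j < 6" "j' < 6" using assms(1,4) unfolding Lf_def by auto
    ultimately show "j = j'" by (auto simp: doubleton_eq_iff)
  qed
  have disj: "N \<inter> (\<lambda>j. {g j, j}) ` U = {}"
  proof -
    have "{g j, j} \<notin> N" if "j \<in> U" for j
    proof
      assume "{g j, j} \<in> N"
      then have "g j < 6" using assms(2) H_small by auto
      moreover have "6 \<le> g j" using assms(1) that unfolding Lf_def by auto
      ultimately show False by simp
    qed
    then show ?thesis by auto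
  qed
  show ?thesis unfolding build_def
    using card_Un_disjoint[OF assms(3) finite_imageI[OF fU] disj] card_image[OF inj] by simp
qed


definition "class N = build N (Uset n f N) ` PiE (Uset n f N) (Lf n f)"

lemma finLf: "finite (Lf n f j)" unfolding Lf_def by auto

lemma mm_union: "maximal_matchings (pendant_graph n f) =
   (\<Union>N\<in>{N. is_matching H_edges N \<and> validL n f N}. class N)"
proof
  show "maximal_matchings (pendant_graph n f) \<subseteq> (\<Union>N\<in>{N. is_matching H_edges N \<and> validL n f N}. class N)"
  proof
    fix M assume "M \<in> maximal_matchings (pendant_graph n f)"
    then have "is_maximal_matching (pendant_graph n f) M" unfolding maximal_matchings_def by auto
    from char_sub[OF this] show "M \<in> (\<Union>N\<in>{N. is_matching H_edges N \<and> validL n f N}. class N)"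
      unfolding class_def by blast
  qed
next
  show "(\<Union>N\<in>{N. is_matching H_edges N \<and> validL n f N}. class N) \<subseteq> maximal_matchings (pendant_graph n f)"
    unfolding class_def maximal_matchings_def using char_sup by blast
qed

lemma finHe: "finite H_edges" unfolding H_edges_def by simp

lemma finVN: "finite {N. is_matching H_edges N \<and> validL n f N}"
proof (rule finite_subset)
  show "{N. is_matching H_edges N \<and> validL n f N} \<subseteq> Pow H_edges" unfolding is_matching_def by auto
  show "finite (Pow H_edges)" using finHe by simp
qed

lemma finH: "N \<subseteq> H_edges \<Longrightarrow> finite N"
  using finHe finite_subset by blast

lemma U6: "Uset n f N \<subseteq> {0..<6}" unfolding Uset_def by auto

lemma class_card: "is_matching H_edges N \<Longrightarrow> card (class N) = (\<Prod>j\<in>Uset n f N. card (Lf n f j))"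
proof -
  assume "is_matching H_edges N"
  then have NH: "N \<subseteq> H_edges" unfolding is_matching_def by auto
  have inj: "inj_on (build N (Uset n f N)) (PiE (Uset n f N) (Lf n f))"
  proof (rule inj_onI)
    fix g g' assume "g \<in> PiE (Uset n f N) (Lf n f)" "g' \<in> PiE (Uset n f N) (Lf n f)"
      "build N (Uset n f N) g = build N (Uset n f N) g'"
    then show "g = g'" using build_inj[OF _ _ _ NH U6] by blast
  qed
  have fin: "finite (Uset n f N)" using U6 finite_subset by blast
  show ?thesis unfolding class_def card_image[OF inj] card_PiE[OF fin] ..
qed

lemma class_sum: "is_matching H_edges N \<Longrightarrow> (\<Sum>M\<in>class N. card M) = card (class N) * (card N + card (Uset n f N))"
proof -
  assume NM: "is_matching H_edges N"
  then have NH: "N \<subseteq> H_edges" unfolding is_matching_def by auto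
  have "(\<Sum>M\<in>class N. card M) = (\<Sum>M\<in>class N. card N + card (Uset n f N))"
  proof (rule sum.cong[OF refl])
    fix M assume "M \<in> class N"
    then obtain g where "g \<in> PiE (Uset n f N) (Lf n f)" "M = build N (Uset n f N) g" unfolding class_def by auto
    then show "card M = card N + card (Uset n f N)" using card_build NH finH[OF NH] U6 by auto
  qed
  then show ?thesis by simp
qed

lemma class_H: "is_matching H_edges N \<Longrightarrow> M \<in> class N \<Longrightarrow> M \<inter> H_edges = N"
proof -
  assume a: "is_matching H_edges N" "M \<in> class N"
  then have NH: "N \<subseteq> H_edges" unfolding is_matching_def by auto
  from a(2) obtain g where "g \<in> PiE (Uset n f N) (Lf n f)" "M = build N (Uset n f N) g"
    unfolding class_def by auto
  then show ?thesis using build_inter_H[OF NH] by simp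
qed

lemma class_disj: "is_matching H_edges N \<Longrightarrow> is_matching H_edges N' \<Longrightarrow> N \<noteq> N' \<Longrightarrow> class N \<inter> class N' = {}"
proof (rule ccontr)
  assume a: "is_matching H_edges N" "is_matching H_edges N'" "N \<noteq> N'" "class N \<inter> class N' \<noteq> {}"
  then obtain M where m1: "M \<in> class N" and m2: "M \<in> class N'" by auto
  have "N = N'" using class_H[OF a(1) m1] class_H[OF a(2) m2] by simp
  then show False using a(3) by simp
qed

lemma class_fin: "finite (class N)"
proof -
  have fin: "finite (Uset n f N)" using U6 finite_subset by blast
  have "finite (PiE (Uset n f N) (Lf n f))" by (rule finite_PiE[OF fin finLf])
  then show ?thesis unfolding class_def by simp
qed

lemma count_mm: "card (maximal_matchings (pendant_graph n f)) =
   (\<Sum>N\<in>{N. is_matching H_edges N \<and> validL n f N}. \<Prod>j\<in>Uset n f N. card (Lf n f j))"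
proof -
  have "card (\<Union>N\<in>{N. is_matching H_edges N \<and> validL n f N}. class N) =
     (\<Sum>N\<in>{N. is_matching H_edges N \<and> validL n f N}. card (class N))"
    apply (rule card_UN_disjoint[OF finVN]) apply (simp add: class_fin) apply (intro ballI impI) apply (rule class_disj) by auto
  also have "\<dots> = (\<Sum>N\<in>{N. is_matching H_edges N \<and> validL n f N}. \<Prod>j\<in>Uset n f N. card (Lf n f j))"
    by (rule sum.cong[OF refl]) (simp add: class_card)
  finally show ?thesis unfolding mm_union .
qed

lemma sum_mm: "(\<Sum>M\<in>maximal_matchings (pendant_graph n f). card M) =
   (\<Sum>N\<in>{N. is_matching H_edges N \<and> validL n f N}. (\<Prod>j\<in>Uset n f N. card (Lf n f j)) * (card N + card (Uset n f N)))"
proof -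
  have "(\<Sum>M\<in>(\<Union>N\<in>{N. is_matching H_edges N \<and> validL n f N}. class N). card M) =
     (\<Sum>N\<in>{N. is_matching H_edges N \<and> validL n f N}. \<Sum>M\<in>class N. card M)"
    apply (rule sum.UNION_disjoint[OF finVN]) apply (simp add: class_fin) apply (intro ballI impI) apply (rule class_disj) by auto
  also have "\<dots> = (\<Sum>N\<in>{N. is_matching H_edges N \<and> validL n f N}. (\<Prod>j\<in>Uset n f N. card (Lf n f j)) * (card N + card (Uset n f N)))"
    by (rule sum.cong[OF refl]) (simp add: class_card class_sum)
  finally show ?thesis unfolding mm_union .
qed

end

definition Ns :: "nat set set list" where
"Ns = [{}, {{0,1}}, {{1,2}}, {{0,2}}, {{3,4}}, {{4,5}}, {{3,5}}, {{2,3}}, {{0,1},{3,4}}, {{0,1},{4,5}}, {{0,1},{3,5}}, {{0,1},{2,3}}, {{1,2},{3,4}}, {{1,2},{4,5}}, {{1,2},{3,5}}, {{0,2},{3,4}}, {{0,2},{4,5}}, {{0,2},{3,5}}, {{4,5},{2,3}}, {{0,1},{4,5},{2,3}}]"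

definition NV :: "(nat \<times> nat set) list" where
"NV = [(0, {}), (1, {0,1}), (1, {1,2}), (1, {0,2}), (1, {3,4}), (1, {4,5}), (1, {3,5}), (1, {2,3}), (2, {0,1,3,4}), (2, {0,1,4,5}), (2, {0,1,3,5}), (2, {0,1,2,3}), (2, {1,2,3,4}), (2, {1,2,4,5}), (2, {1,2,3,5}), (2, {0,2,3,4}), (2, {0,2,4,5}), (2, {0,2,3,5}), (2, {2,3,4,5}), (3, {0,1,2,3,4,5})]"

lemma distinct_Ns: "distinct Ns"
  unfolding Ns_def by (simp add: doubleton_eq_iff insert_eq_iff)

lemma NV_eq: "map (\<lambda>N. (card N, \<Union>N)) Ns = NV"
  unfolding Ns_def NV_def by (simp add: doubleton_eq_iff insert_commute)

lemma Ns_match: "N \<in> set Ns \<Longrightarrow> is_matching H_edges N"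
  unfolding Ns_def is_matching_def H_edges_def
  by (auto simp add: doubleton_eq_iff insert_eq_iff)

lemma aux_bool: "\<not>(b1\<and>b2) \<Longrightarrow> \<not>(b1\<and>b3) \<Longrightarrow> \<not>(b2\<and>b3) \<Longrightarrow> \<not>(b4\<and>b5) \<Longrightarrow> \<not>(b4\<and>b6) \<Longrightarrow> \<not>(b5\<and>b6)
  \<Longrightarrow> \<not>(b7\<and>b2) \<Longrightarrow> \<not>(b7\<and>b3) \<Longrightarrow> \<not>(b7\<and>b4) \<Longrightarrow> \<not>(b7\<and>b6) \<Longrightarrow>
  (if b1 then {{0,1}} else {}) \<union> (if b2 then {{1,2}} else {}) \<union> (if b3 then {{0,2}} else {})
  \<union> (if b4 then {{3,4}} else {}) \<union> (if b5 then {{4,5}} else {}) \<union> (if b6 then {{3,5}} else {})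
  \<union> (if b7 then {{2,3::nat}} else {}) \<in> set Ns"
  unfolding Ns_def
  by (cases b1; cases b2; cases b3; cases b4; cases b5; cases b6; cases b7; simp only: if_True if_False Un_empty_right Un_empty_left Un_insert_left Un_insert_right; simp add: insert_commute)

lemma match_Ns: assumes "is_matching H_edges N" shows "N \<in> set Ns"
proof -
  have sub: "N \<subseteq> H_edges" and conf: "\<And>e e'. e\<in>N \<Longrightarrow> e'\<in>N \<Longrightarrow> e \<noteq> e' \<Longrightarrow> e \<inter> e' = {}"
    using assms unfolding is_matching_def by auto
  have eq: "N = (if {0,1}\<in>N then {{0,1}} else {}) \<union> (if {1,2}\<in>N then {{1,2}} else {}) \<union> (if {0,2}\<in>N then {{0,2}} else {})
  \<union> (if {3,4}\<in>N then {{3,4}} else {}) \<union> (if {4,5}\<in>N then {{4,5}} else {}) \<union> (if {3,5}\<in>N then {{3,5}} else {})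
  \<union> (if {2,3}\<in>N then {{2,3::nat}} else {})" (is "N = ?R")
  proof (rule set_eqI)
    fix e show "e \<in> N \<longleftrightarrow> e \<in> ?R"
    proof
      assume "e \<in> N"
      then have "e \<in> H_edges" using sub by auto
      then show "e \<in> ?R" unfolding H_mem using \<open>e \<in> N\<close> by (elim disjE) simp_all
    next
      have "?R \<subseteq> N" by (intro Un_least) simp_all
      then show "e \<in> ?R \<Longrightarrow> e \<in> N" by blast
    qed
  qed
  have cf: "\<And>x y. x \<inter> y \<noteq> {} \<Longrightarrow> x \<noteq> y \<Longrightarrow> \<not>(x\<in>N \<and> y\<in>N)" using conf by blast
  show ?thesis
    apply (subst eq)
    apply (rule aux_bool)
    by (rule cf; simp add: doubleton_eq_iff)+
qed

definition fac :: "(nat \<Rightarrow> nat) \<Rightarrow> nat set \<Rightarrow> nat \<Rightarrow> nat" where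
  "fac a V j = (if j \<notin> V \<and> a j \<noteq> 0 then a j else 1)"
definition ind :: "(nat \<Rightarrow> nat) \<Rightarrow> nat set \<Rightarrow> nat \<Rightarrow> nat" where
  "ind a V j = (if j \<notin> V \<and> a j \<noteq> 0 then 1 else 0)"
definition validV :: "(nat \<Rightarrow> nat) \<Rightarrow> nat set \<Rightarrow> bool" where
  "validV a V = (\<forall>e\<in>H_edges. e \<inter> V = {} \<longrightarrow> (\<exists>j\<in>e. a j \<noteq> 0))"
definition wV :: "(nat \<Rightarrow> nat) \<Rightarrow> nat set \<Rightarrow> nat" where
  "wV a V = fac a V 0 * fac a V 1 * fac a V 2 * fac a V 3 * fac a V 4 * fac a V 5"
definition kV :: "(nat \<Rightarrow> nat) \<Rightarrow> nat set \<Rightarrow> nat" where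
  "kV a V = ind a V 0 + ind a V 1 + ind a V 2 + ind a V 3 + ind a V 4 + ind a V 5"
definition cntA :: "(nat \<Rightarrow> nat) \<Rightarrow> nat" where
  "cntA a = sum_list (map (\<lambda>(c,V). if validV a V then wV a V else 0) NV)"
definition totA :: "(nat \<Rightarrow> nat) \<Rightarrow> nat" where
  "totA a = sum_list (map (\<lambda>(c,V). if validV a V then wV a V * (c + kV a V) else 0) NV)"

lemma six: "{0..<6::nat} = {0,1,2,3,4,5}" by auto

context
  fixes n :: nat and f :: "nat \<Rightarrow> nat"
  assumes fr: "\<forall>i\<in>{6..<n}. f i < 6"
begin

lemma ne_card: "(Lf n f j \<noteq> {}) = (card (Lf n f j) \<noteq> 0)"
proof -
  have "finite (Lf n f j)" unfolding Lf_def by auto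
  then show ?thesis by auto
qed

lemma VN_eq: "{N. is_matching H_edges N \<and> validL n f N} = {N \<in> set Ns. validV (\<lambda>j. card (Lf n f j)) (\<Union>N)}"
proof -
  have "validL n f N = validV (\<lambda>j. card (Lf n f j)) (\<Union>N)" for N
    unfolding validL_def validV_def ne_card ..
  then show ?thesis using match_Ns Ns_match by blast
qed

lemma U_eq: "Uset n f N = {j \<in> {0..<6}. j \<notin> \<Union>N \<and> card (Lf n f j) \<noteq> 0}"
  unfolding Uset_def ne_card ..

lemma w_eq: "(\<Prod>j\<in>Uset n f N. card (Lf n f j)) = wV (\<lambda>j. card (Lf n f j)) (\<Union>N)"
proof -
  have "(\<Prod>j\<in>Uset n f N. card (Lf n f j)) = (\<Prod>j\<in>{0..<6}. fac (\<lambda>j. card (Lf n f j)) (\<Union>N) j)"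
    unfolding U_eq fac_def by (rule prod.inter_filter) simp
  also have "\<dots> = wV (\<lambda>j. card (Lf n f j)) (\<Union>N)"
    unfolding six wV_def by (simp add: mult.assoc)
  finally show ?thesis .
qed

lemma k_eq: "card (Uset n f N) = kV (\<lambda>j. card (Lf n f j)) (\<Union>N)"
proof -
  have "card (Uset n f N) = (\<Sum>j\<in>{0..<6}. ind (\<lambda>j. card (Lf n f j)) (\<Union>N) j)"
    unfolding U_eq ind_def card_eq_sum by (rule sum.inter_filter) simp
  also have "\<dots> = kV (\<lambda>j. card (Lf n f j)) (\<Union>N)"
    unfolding six kV_def by (simp add: add.assoc)
  finally show ?thesis .
qed

lemma sum_Ns: "(\<Sum>N\<in>{N \<in> set Ns. P N}. g N) = sum_list (map (\<lambda>N. if P N then g N else 0) Ns)"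
  by (simp add: sum.inter_filter sum_list_distinct_conv_sum_set[OF distinct_Ns])

lemma count_final: "card (maximal_matchings (pendant_graph n f)) = cntA (\<lambda>j. card (Lf n f j))"
  unfolding count_mm[OF fr] VN_eq sum_Ns w_eq cntA_def NV_eq[symmetric] map_map o_def by simp

lemma sum_final: "(\<Sum>M\<in>maximal_matchings (pendant_graph n f). card M) = totA (\<lambda>j. card (Lf n f j))"
  unfolding sum_mm[OF fr] VN_eq sum_Ns w_eq k_eq totA_def NV_eq[symmetric] map_map o_def by simp

end

lemma eq_add_pos: "(x::nat) = y + q \<Longrightarrow> 0 < q \<Longrightarrow> y < x" by simp

lemma case_ssss:
  fixes a :: "nat \<Rightarrow> nat"
  assumes "a 0 = Suc b0" "a 1 = Suc b1" "a 2 = Suc b2" "a 3 = Suc b3" "a 4 = Suc b4" "a 5 = Suc b5"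
  shows "(9*(a 0+a 1+a 2+a 3+a 4+a 5)+15)*cntA a < totA a * (3*(a 0+a 1+a 2+a 3+a 4+a 5)+7)"
proof -
  have s1: "a (Suc 0) = Suc b1" using assms(2) by simp
  have "totA a * (3*(a 0+a 1+a 2+a 3+a 4+a 5)+7) = (9*(a 0+a 1+a 2+a 3+a 4+a 5)+15)*cntA a + (820 + 569*b5 + 51*b5*b5 + 569*b4 + 438*b4*b5 + 36*b4*b5*b5 + 51*b4*b4 + 36*b4*b4*b5 + 482*b3 + 342*b3*b5 + 27*b3*b5*b5 + 342*b3*b4 + 339*b3*b4*b5 + 27*b3*b4*b5*b5 + 27*b3*b4*b4 + 27*b3*b4*b4*b5 + 42*b3*b3 + 27*b3*b3*b5 + 27*b3*b3*b4 + 27*b3*b3*b4*b5 + 482*b2 + 317*b2*b5 + 24*b2*b5*b5 + 317*b2*b4 + 221*b2*b4*b5 + 15*b2*b4*b5*b5 + 24*b2*b4*b4 + 15*b2*b4*b4*b5 + 308*b2*b3 + 212*b2*b3*b5 + 15*b2*b3*b5*b5 + 212*b2*b3*b4 + 209*b2*b3*b4*b5 + 15*b2*b3*b4*b5*b5 + 15*b2*b3*b4*b4 + 15*b2*b3*b4*b4*b5 + 24*b2*b3*b3 + 15*b2*b3*b3*b5 + 15*b2*b3*b3*b4 + 15*b2*b3*b3*b4*b5 + 42*b2*b2 + 24*b2*b2*b5 + 24*b2*b2*b4 + 15*b2*b2*b4*b5 + 24*b2*b2*b3 + 15*b2*b2*b3*b5 + 15*b2*b2*b3*b4 + 15*b2*b2*b3*b4*b5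 + 569*b1 + 382*b1*b5 + 30*b1*b5*b5 + 382*b1*b4 + 289*b1*b4*b5 + 21*b1*b4*b5*b5 + 30*b1*b4*b4 + 21*b1*b4*b4*b5 + 317*b1*b3 + 218*b1*b3*b5 + 15*b1*b3*b5*b5 + 218*b1*b3*b4 + 215*b1*b3*b4*b5 + 15*b1*b3*b4*b5*b5 + 15*b1*b3*b4*b4 + 15*b1*b3*b4*b4*b5 + 24*b1*b3*b3 + 15*b1*b3*b3*b5 + 15*b1*b3*b3*b4 + 15*b1*b3*b3*b4*b5 + 342*b1*b2 + 218*b1*b2*b5 + 15*b1*b2*b5*b5 + 218*b1*b2*b4 + 147*b1*b2*b4*b5 + 9*b1*b2*b4*b5*b5 + 15*b1*b2*b4*b4 + 9*b1*b2*b4*b4*b5 + 212*b1*b2*b3 + 141*b1*b2*b3*b5 + 9*b1*b2*b3*b5*b5 + 141*b1*b2*b3*b4 + 138*b1*b2*b3*b4*b5 + 9*b1*b2*b3*b4*b5*b5 + 9*b1*b2*b3*b4*b4 + 9*b1*b2*b3*b4*b4*b5 + 15*b1*b2*b3*b3 + 9*b1*b2*b3*b3*b5 + 9*b1*b2*b3*b3*b4 + 9*b1*b2*b3*b3*b4*b5 + 27*b1*b2*b2 + 15*b1*b2*b2*b5 + 15*b1*b2*b2*b4 + 9*b1*b2*b2*b4*b5 + 15*b1*b2*b2*b3 + 9*b1*b2*b2*b3*b5 + 9*b1*b2*b2*b3*b4 + 9*b1*b2*b2*b3*b4*b5 + 51*b1*b1 + 30*b1*b1*b5 + 30*b1*b1*b4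 + 21*b1*b1*b4*b5 + 24*b1*b1*b3 + 15*b1*b1*b3*b5 + 15*b1*b1*b3*b4 + 15*b1*b1*b3*b4*b5 + 27*b1*b1*b2 + 15*b1*b1*b2*b5 + 15*b1*b1*b2*b4 + 9*b1*b1*b2*b4*b5 + 15*b1*b1*b2*b3 + 9*b1*b1*b2*b3*b5 + 9*b1*b1*b2*b3*b4 + 9*b1*b1*b2*b3*b4*b5 + 569*b0 + 382*b0*b5 + 30*b0*b5*b5 + 382*b0*b4 + 289*b0*b4*b5 + 21*b0*b4*b5*b5 + 30*b0*b4*b4 + 21*b0*b4*b4*b5 + 317*b0*b3 + 218*b0*b3*b5 + 15*b0*b3*b5*b5 + 218*b0*b3*b4 + 215*b0*b3*b4*b5 + 15*b0*b3*b4*b5*b5 + 15*b0*b3*b4*b4 + 15*b0*b3*b4*b4*b5 + 24*b0*b3*b3 + 15*b0*b3*b3*b5 + 15*b0*b3*b3*b4 + 15*b0*b3*b3*b4*b5 + 342*b0*b2 + 218*b0*b2*b5 + 15*b0*b2*b5*b5 + 218*b0*b2*b4 + 147*b0*b2*b4*b5 + 9*b0*b2*b4*b5*b5 + 15*b0*b2*b4*b4 + 9*b0*b2*b4*b4*b5 + 212*b0*b2*b3 + 141*b0*b2*b3*b5 + 9*b0*b2*b3*b5*b5 + 141*b0*b2*b3*b4 + 138*b0*b2*b3*b4*b5 + 9*b0*b2*b3*b4*b5*b5 + 9*b0*b2*b3*b4*b4 + 9*b0*b2*b3*b4*b4*b5 + 15*b0*b2*b3*b3 + 9*b0*b2*b3*b3*b5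 + 9*b0*b2*b3*b3*b4 + 9*b0*b2*b3*b3*b4*b5 + 27*b0*b2*b2 + 15*b0*b2*b2*b5 + 15*b0*b2*b2*b4 + 9*b0*b2*b2*b4*b5 + 15*b0*b2*b2*b3 + 9*b0*b2*b2*b3*b5 + 9*b0*b2*b2*b3*b4 + 9*b0*b2*b2*b3*b4*b5 + 438*b0*b1 + 289*b0*b1*b5 + 21*b0*b1*b5*b5 + 289*b0*b1*b4 + 221*b0*b1*b4*b5 + 15*b0*b1*b4*b5*b5 + 21*b0*b1*b4*b4 + 15*b0*b1*b4*b4*b5 + 221*b0*b1*b3 + 147*b0*b1*b3*b5 + 9*b0*b1*b3*b5*b5 + 147*b0*b1*b3*b4 + 144*b0*b1*b3*b4*b5 + 9*b0*b1*b3*b4*b5*b5 + 9*b0*b1*b3*b4*b4 + 9*b0*b1*b3*b4*b4*b5 + 15*b0*b1*b3*b3 + 9*b0*b1*b3*b3*b5 + 9*b0*b1*b3*b3*b4 + 9*b0*b1*b3*b3*b4*b5 + 339*b0*b1*b2 + 215*b0*b1*b2*b5 + 15*b0*b1*b2*b5*b5 + 215*b0*b1*b2*b4 + 144*b0*b1*b2*b4*b5 + 9*b0*b1*b2*b4*b5*b5 + 15*b0*b1*b2*b4*b4 + 9*b0*b1*b2*b4*b4*b5 + 209*b0*b1*b2*b3 + 138*b0*b1*b2*b3*b5 + 9*b0*b1*b2*b3*b5*b5 + 138*b0*b1*b2*b3*b4 + 135*b0*b1*b2*b3*b4*b5 + 9*b0*b1*b2*b3*b4*b5*b5 + 9*b0*b1*b2*b3*b4*b4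 + 9*b0*b1*b2*b3*b4*b4*b5 + 15*b0*b1*b2*b3*b3 + 9*b0*b1*b2*b3*b3*b5 + 9*b0*b1*b2*b3*b3*b4 + 9*b0*b1*b2*b3*b3*b4*b5 + 27*b0*b1*b2*b2 + 15*b0*b1*b2*b2*b5 + 15*b0*b1*b2*b2*b4 + 9*b0*b1*b2*b2*b4*b5 + 15*b0*b1*b2*b2*b3 + 9*b0*b1*b2*b2*b3*b5 + 9*b0*b1*b2*b2*b3*b4 + 9*b0*b1*b2*b2*b3*b4*b5 + 36*b0*b1*b1 + 21*b0*b1*b1*b5 + 21*b0*b1*b1*b4 + 15*b0*b1*b1*b4*b5 + 15*b0*b1*b1*b3 + 9*b0*b1*b1*b3*b5 + 9*b0*b1*b1*b3*b4 + 9*b0*b1*b1*b3*b4*b5 + 27*b0*b1*b1*b2 + 15*b0*b1*b1*b2*b5 + 15*b0*b1*b1*b2*b4 + 9*b0*b1*b1*b2*b4*b5 + 15*b0*b1*b1*b2*b3 + 9*b0*b1*b1*b2*b3*b5 + 9*b0*b1*b1*b2*b3*b4 + 9*b0*b1*b1*b2*b3*b4*b5 + 51*b0*b0 + 30*b0*b0*b5 + 30*b0*b0*b4 + 21*b0*b0*b4*b5 + 24*b0*b0*b3 + 15*b0*b0*b3*b5 + 15*b0*b0*b3*b4 + 15*b0*b0*b3*b4*b5 + 27*b0*b0*b2 + 15*b0*b0*b2*b5 + 15*b0*b0*b2*b4 + 9*b0*b0*b2*b4*b5 + 15*b0*b0*b2*b3 + 9*b0*b0*b2*b3*b5 + 9*b0*b0*b2*b3*b4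 + 9*b0*b0*b2*b3*b4*b5 + 36*b0*b0*b1 + 21*b0*b0*b1*b5 + 21*b0*b0*b1*b4 + 15*b0*b0*b1*b4*b5 + 15*b0*b0*b1*b3 + 9*b0*b0*b1*b3*b5 + 9*b0*b0*b1*b3*b4 + 9*b0*b0*b1*b3*b4*b5 + 27*b0*b0*b1*b2 + 15*b0*b0*b1*b2*b5 + 15*b0*b0*b1*b2*b4 + 9*b0*b0*b1*b2*b4*b5 + 15*b0*b0*b1*b2*b3 + 9*b0*b0*b1*b2*b3*b5 + 9*b0*b0*b1*b2*b3*b4 + 9*b0*b0*b1*b2*b3*b4*b5)"
    unfolding cntA_def totA_def NV_def
    apply (simp add: validV_def wV_def kV_def fac_def ind_def H_edges_def assms s1)
    by algebra
  moreover have "0 < (820 + 569*b5 + 51*b5*b5 + 569*b4 + 438*b4*b5 + 36*b4*b5*b5 + 51*b4*b4 + 36*b4*b4*b5 + 482*b3 + 342*b3*b5 + 27*b3*b5*b5 + 342*b3*b4 + 339*b3*b4*b5 + 27*b3*b4*b5*b5 + 27*b3*b4*b4 + 27*b3*b4*b4*b5 + 42*b3*b3 + 27*b3*b3*b5 + 27*b3*b3*b4 + 27*b3*b3*b4*b5 + 482*b2 + 317*b2*b5 + 24*b2*b5*b5 + 317*b2*b4 + 221*b2*b4*b5 + 15*b2*b4*b5*b5 + 24*b2*b4*b4 + 15*b2*b4*b4*b5 + 308*b2*b3 + 212*b2*b3*b5 + 15*b2*b3*b5*b5 + 212*b2*b3*b4 + 209*b2*b3*b4*b5 + 15*b2*b3*b4*b5*b5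 + 15*b2*b3*b4*b4 + 15*b2*b3*b4*b4*b5 + 24*b2*b3*b3 + 15*b2*b3*b3*b5 + 15*b2*b3*b3*b4 + 15*b2*b3*b3*b4*b5 + 42*b2*b2 + 24*b2*b2*b5 + 24*b2*b2*b4 + 15*b2*b2*b4*b5 + 24*b2*b2*b3 + 15*b2*b2*b3*b5 + 15*b2*b2*b3*b4 + 15*b2*b2*b3*b4*b5 + 569*b1 + 382*b1*b5 + 30*b1*b5*b5 + 382*b1*b4 + 289*b1*b4*b5 + 21*b1*b4*b5*b5 + 30*b1*b4*b4 + 21*b1*b4*b4*b5 + 317*b1*b3 + 218*b1*b3*b5 + 15*b1*b3*b5*b5 + 218*b1*b3*b4 + 215*b1*b3*b4*b5 + 15*b1*b3*b4*b5*b5 + 15*b1*b3*b4*b4 + 15*b1*b3*b4*b4*b5 + 24*b1*b3*b3 + 15*b1*b3*b3*b5 + 15*b1*b3*b3*b4 + 15*b1*b3*b3*b4*b5 + 342*b1*b2 + 218*b1*b2*b5 + 15*b1*b2*b5*b5 + 218*b1*b2*b4 + 147*b1*b2*b4*b5 + 9*b1*b2*b4*b5*b5 + 15*b1*b2*b4*b4 + 9*b1*b2*b4*b4*b5 + 212*b1*b2*b3 + 141*b1*b2*b3*b5 + 9*b1*b2*b3*b5*b5 + 141*b1*b2*b3*b4 + 138*b1*b2*b3*b4*b5 + 9*b1*b2*b3*b4*b5*b5 + 9*b1*b2*b3*b4*b4 + 9*b1*b2*b3*b4*b4*b5 + 15*b1*b2*b3*b3 + 9*b1*b2*b3*b3*b5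 + 9*b1*b2*b3*b3*b4 + 9*b1*b2*b3*b3*b4*b5 + 27*b1*b2*b2 + 15*b1*b2*b2*b5 + 15*b1*b2*b2*b4 + 9*b1*b2*b2*b4*b5 + 15*b1*b2*b2*b3 + 9*b1*b2*b2*b3*b5 + 9*b1*b2*b2*b3*b4 + 9*b1*b2*b2*b3*b4*b5 + 51*b1*b1 + 30*b1*b1*b5 + 30*b1*b1*b4 + 21*b1*b1*b4*b5 + 24*b1*b1*b3 + 15*b1*b1*b3*b5 + 15*b1*b1*b3*b4 + 15*b1*b1*b3*b4*b5 + 27*b1*b1*b2 + 15*b1*b1*b2*b5 + 15*b1*b1*b2*b4 + 9*b1*b1*b2*b4*b5 + 15*b1*b1*b2*b3 + 9*b1*b1*b2*b3*b5 + 9*b1*b1*b2*b3*b4 + 9*b1*b1*b2*b3*b4*b5 + 569*b0 + 382*b0*b5 + 30*b0*b5*b5 + 382*b0*b4 + 289*b0*b4*b5 + 21*b0*b4*b5*b5 + 30*b0*b4*b4 + 21*b0*b4*b4*b5 + 317*b0*b3 + 218*b0*b3*b5 + 15*b0*b3*b5*b5 + 218*b0*b3*b4 + 215*b0*b3*b4*b5 + 15*b0*b3*b4*b5*b5 + 15*b0*b3*b4*b4 + 15*b0*b3*b4*b4*b5 + 24*b0*b3*b3 + 15*b0*b3*b3*b5 + 15*b0*b3*b3*b4 + 15*b0*b3*b3*b4*b5 + 342*b0*b2 + 218*b0*b2*b5 + 15*b0*b2*b5*b5 + 218*b0*b2*b4 + 147*b0*b2*b4*b5 + 9*b0*b2*b4*b5*b5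 + 15*b0*b2*b4*b4 + 9*b0*b2*b4*b4*b5 + 212*b0*b2*b3 + 141*b0*b2*b3*b5 + 9*b0*b2*b3*b5*b5 + 141*b0*b2*b3*b4 + 138*b0*b2*b3*b4*b5 + 9*b0*b2*b3*b4*b5*b5 + 9*b0*b2*b3*b4*b4 + 9*b0*b2*b3*b4*b4*b5 + 15*b0*b2*b3*b3 + 9*b0*b2*b3*b3*b5 + 9*b0*b2*b3*b3*b4 + 9*b0*b2*b3*b3*b4*b5 + 27*b0*b2*b2 + 15*b0*b2*b2*b5 + 15*b0*b2*b2*b4 + 9*b0*b2*b2*b4*b5 + 15*b0*b2*b2*b3 + 9*b0*b2*b2*b3*b5 + 9*b0*b2*b2*b3*b4 + 9*b0*b2*b2*b3*b4*b5 + 438*b0*b1 + 289*b0*b1*b5 + 21*b0*b1*b5*b5 + 289*b0*b1*b4 + 221*b0*b1*b4*b5 + 15*b0*b1*b4*b5*b5 + 21*b0*b1*b4*b4 + 15*b0*b1*b4*b4*b5 + 221*b0*b1*b3 + 147*b0*b1*b3*b5 + 9*b0*b1*b3*b5*b5 + 147*b0*b1*b3*b4 + 144*b0*b1*b3*b4*b5 + 9*b0*b1*b3*b4*b5*b5 + 9*b0*b1*b3*b4*b4 + 9*b0*b1*b3*b4*b4*b5 + 15*b0*b1*b3*b3 + 9*b0*b1*b3*b3*b5 + 9*b0*b1*b3*b3*b4 + 9*b0*b1*b3*b3*b4*b5 + 339*b0*b1*b2 + 215*b0*b1*b2*b5 + 15*b0*b1*b2*b5*b5 + 215*b0*b1*b2*b4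 + 144*b0*b1*b2*b4*b5 + 9*b0*b1*b2*b4*b5*b5 + 15*b0*b1*b2*b4*b4 + 9*b0*b1*b2*b4*b4*b5 + 209*b0*b1*b2*b3 + 138*b0*b1*b2*b3*b5 + 9*b0*b1*b2*b3*b5*b5 + 138*b0*b1*b2*b3*b4 + 135*b0*b1*b2*b3*b4*b5 + 9*b0*b1*b2*b3*b4*b5*b5 + 9*b0*b1*b2*b3*b4*b4 + 9*b0*b1*b2*b3*b4*b4*b5 + 15*b0*b1*b2*b3*b3 + 9*b0*b1*b2*b3*b3*b5 + 9*b0*b1*b2*b3*b3*b4 + 9*b0*b1*b2*b3*b3*b4*b5 + 27*b0*b1*b2*b2 + 15*b0*b1*b2*b2*b5 + 15*b0*b1*b2*b2*b4 + 9*b0*b1*b2*b2*b4*b5 + 15*b0*b1*b2*b2*b3 + 9*b0*b1*b2*b2*b3*b5 + 9*b0*b1*b2*b2*b3*b4 + 9*b0*b1*b2*b2*b3*b4*b5 + 36*b0*b1*b1 + 21*b0*b1*b1*b5 + 21*b0*b1*b1*b4 + 15*b0*b1*b1*b4*b5 + 15*b0*b1*b1*b3 + 9*b0*b1*b1*b3*b5 + 9*b0*b1*b1*b3*b4 + 9*b0*b1*b1*b3*b4*b5 + 27*b0*b1*b1*b2 + 15*b0*b1*b1*b2*b5 + 15*b0*b1*b1*b2*b4 + 9*b0*b1*b1*b2*b4*b5 + 15*b0*b1*b1*b2*b3 + 9*b0*b1*b1*b2*b3*b5 + 9*b0*b1*b1*b2*b3*b4 + 9*b0*b1*b1*b2*b3*b4*b5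 + 51*b0*b0 + 30*b0*b0*b5 + 30*b0*b0*b4 + 21*b0*b0*b4*b5 + 24*b0*b0*b3 + 15*b0*b0*b3*b5 + 15*b0*b0*b3*b4 + 15*b0*b0*b3*b4*b5 + 27*b0*b0*b2 + 15*b0*b0*b2*b5 + 15*b0*b0*b2*b4 + 9*b0*b0*b2*b4*b5 + 15*b0*b0*b2*b3 + 9*b0*b0*b2*b3*b5 + 9*b0*b0*b2*b3*b4 + 9*b0*b0*b2*b3*b4*b5 + 36*b0*b0*b1 + 21*b0*b0*b1*b5 + 21*b0*b0*b1*b4 + 15*b0*b0*b1*b4*b5 + 15*b0*b0*b1*b3 + 9*b0*b0*b1*b3*b5 + 9*b0*b0*b1*b3*b4 + 9*b0*b0*b1*b3*b4*b5 + 27*b0*b0*b1*b2 + 15*b0*b0*b1*b2*b5 + 15*b0*b0*b1*b2*b4 + 9*b0*b0*b1*b2*b4*b5 + 15*b0*b0*b1*b2*b3 + 9*b0*b0*b1*b2*b3*b5 + 9*b0*b0*b1*b2*b3*b4 + 9*b0*b0*b1*b2*b3*b4*b5)" by simp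
  ultimately show ?thesis by (rule eq_add_pos)
qed

lemma case_sssz:
  fixes a :: "nat \<Rightarrow> nat"
  assumes "a 0 = Suc b0" "a 1 = Suc b1" "a 2 = Suc b2" "a 3 = Suc b3" "a 4 = Suc b4" "a 5 = 0"
  shows "(9*(a 0+a 1+a 2+a 3+a 4+a 5)+15)*cntA a < totA a * (3*(a 0+a 1+a 2+a 3+a 4+a 5)+7)"
proof -
  have s1: "a (Suc 0) = Suc b1" using assms(2) by simp
  have "totA a * (3*(a 0+a 1+a 2+a 3+a 4+a 5)+7) = (9*(a 0+a 1+a 2+a 3+a 4+a 5)+15)*cntA a + (516 + 356*b4 + 33*b4*b4 + 322*b3 + 197*b3*b4 + 15*b3*b4*b4 + 30*b3*b3 + 15*b3*b3*b4 + 322*b2 + 219*b2*b4 + 18*b2*b4*b4 + 216*b2*b3 + 129*b2*b3*b4 + 9*b2*b3*b4*b4 + 18*b2*b3*b3 + 9*b2*b3*b3*b4 + 30*b2*b2 + 18*b2*b2*b4 + 18*b2*b2*b3 + 9*b2*b2*b3*b4 + 378*b1 + 253*b1*b4 + 21*b1*b4*b4 + 222*b1*b3 + 132*b1*b3*b4 + 9*b1*b3*b4*b4 + 18*b1*b3*b3 + 9*b1*b3*b3*b4 + 244*b1*b2 + 160*b1*b2*b4 + 12*b1*b2*b4*b4 + 157*b1*b2*b3 + 92*b1*b2*b3*b4 + 6*b1*b2*b3*b4*b4 + 12*b1*b2*b3*b3 + 6*b1*b2*b3*b3*b4 + 21*b1*b2*b2 + 12*b1*b2*b2*b4 + 12*b1*b2*b2*b3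 + 6*b1*b2*b2*b3*b4 + 36*b1*b1 + 21*b1*b1*b4 + 18*b1*b1*b3 + 9*b1*b1*b3*b4 + 21*b1*b1*b2 + 12*b1*b1*b2*b4 + 12*b1*b1*b2*b3 + 6*b1*b1*b2*b3*b4 + 378*b0 + 253*b0*b4 + 21*b0*b4*b4 + 222*b0*b3 + 132*b0*b3*b4 + 9*b0*b3*b4*b4 + 18*b0*b3*b3 + 9*b0*b3*b3*b4 + 244*b0*b2 + 160*b0*b2*b4 + 12*b0*b2*b4*b4 + 157*b0*b2*b3 + 92*b0*b2*b3*b4 + 6*b0*b2*b3*b4*b4 + 12*b0*b2*b3*b3 + 6*b0*b2*b3*b3*b4 + 21*b0*b2*b2 + 12*b0*b2*b2*b4 + 12*b0*b2*b2*b3 + 6*b0*b2*b2*b3*b4 + 306*b0*b1 + 197*b0*b1*b4 + 15*b0*b1*b4*b4 + 163*b0*b1*b3 + 95*b0*b1*b3*b4 + 6*b0*b1*b3*b4*b4 + 12*b0*b1*b3*b3 + 6*b0*b1*b3*b3*b4 + 247*b0*b1*b2 + 160*b0*b1*b2*b4 + 12*b0*b1*b2*b4*b4 + 157*b0*b1*b2*b3 + 92*b0*b1*b2*b3*b4 + 6*b0*b1*b2*b3*b4*b4 + 12*b0*b1*b2*b3*b3 + 6*b0*b1*b2*b3*b3*b4 + 21*b0*b1*b2*b2 + 12*b0*b1*b2*b2*b4 + 12*b0*b1*b2*b2*b3 + 6*b0*b1*b2*b2*b3*b4 + 27*b0*b1*b1 + 15*b0*b1*b1*b4 + 12*b0*b1*b1*b3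 + 6*b0*b1*b1*b3*b4 + 21*b0*b1*b1*b2 + 12*b0*b1*b1*b2*b4 + 12*b0*b1*b1*b2*b3 + 6*b0*b1*b1*b2*b3*b4 + 36*b0*b0 + 21*b0*b0*b4 + 18*b0*b0*b3 + 9*b0*b0*b3*b4 + 21*b0*b0*b2 + 12*b0*b0*b2*b4 + 12*b0*b0*b2*b3 + 6*b0*b0*b2*b3*b4 + 27*b0*b0*b1 + 15*b0*b0*b1*b4 + 12*b0*b0*b1*b3 + 6*b0*b0*b1*b3*b4 + 21*b0*b0*b1*b2 + 12*b0*b0*b1*b2*b4 + 12*b0*b0*b1*b2*b3 + 6*b0*b0*b1*b2*b3*b4)"
    unfolding cntA_def totA_def NV_def
    apply (simp add: validV_def wV_def kV_def fac_def ind_def H_edges_def assms s1)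
    by algebra
  moreover have "0 < (516 + 356*b4 + 33*b4*b4 + 322*b3 + 197*b3*b4 + 15*b3*b4*b4 + 30*b3*b3 + 15*b3*b3*b4 + 322*b2 + 219*b2*b4 + 18*b2*b4*b4 + 216*b2*b3 + 129*b2*b3*b4 + 9*b2*b3*b4*b4 + 18*b2*b3*b3 + 9*b2*b3*b3*b4 + 30*b2*b2 + 18*b2*b2*b4 + 18*b2*b2*b3 + 9*b2*b2*b3*b4 + 378*b1 + 253*b1*b4 + 21*b1*b4*b4 + 222*b1*b3 + 132*b1*b3*b4 + 9*b1*b3*b4*b4 + 18*b1*b3*b3 + 9*b1*b3*b3*b4 + 244*b1*b2 + 160*b1*b2*b4 + 12*b1*b2*b4*b4 + 157*b1*b2*b3 + 92*b1*b2*b3*b4 + 6*b1*b2*b3*b4*b4 + 12*b1*b2*b3*b3 + 6*b1*b2*b3*b3*b4 + 21*b1*b2*b2 + 12*b1*b2*b2*b4 + 12*b1*b2*b2*b3 + 6*b1*b2*b2*b3*b4 + 36*b1*b1 + 21*b1*b1*b4 + 18*b1*b1*b3 + 9*b1*b1*b3*b4 + 21*b1*b1*b2 + 12*b1*b1*b2*b4 + 12*b1*b1*b2*b3 + 6*b1*b1*b2*b3*b4 + 378*b0 + 253*b0*b4 + 21*b0*b4*b4 + 222*b0*b3 + 132*b0*b3*b4 + 9*b0*b3*b4*b4 + 18*b0*b3*b3 + 9*b0*b3*b3*b4 + 244*b0*b2 + 160*b0*b2*b4 + 12*b0*b2*b4*b4 + 157*b0*b2*b3 + 92*b0*b2*b3*b4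 + 6*b0*b2*b3*b4*b4 + 12*b0*b2*b3*b3 + 6*b0*b2*b3*b3*b4 + 21*b0*b2*b2 + 12*b0*b2*b2*b4 + 12*b0*b2*b2*b3 + 6*b0*b2*b2*b3*b4 + 306*b0*b1 + 197*b0*b1*b4 + 15*b0*b1*b4*b4 + 163*b0*b1*b3 + 95*b0*b1*b3*b4 + 6*b0*b1*b3*b4*b4 + 12*b0*b1*b3*b3 + 6*b0*b1*b3*b3*b4 + 247*b0*b1*b2 + 160*b0*b1*b2*b4 + 12*b0*b1*b2*b4*b4 + 157*b0*b1*b2*b3 + 92*b0*b1*b2*b3*b4 + 6*b0*b1*b2*b3*b4*b4 + 12*b0*b1*b2*b3*b3 + 6*b0*b1*b2*b3*b3*b4 + 21*b0*b1*b2*b2 + 12*b0*b1*b2*b2*b4 + 12*b0*b1*b2*b2*b3 + 6*b0*b1*b2*b2*b3*b4 + 27*b0*b1*b1 + 15*b0*b1*b1*b4 + 12*b0*b1*b1*b3 + 6*b0*b1*b1*b3*b4 + 21*b0*b1*b1*b2 + 12*b0*b1*b1*b2*b4 + 12*b0*b1*b1*b2*b3 + 6*b0*b1*b1*b2*b3*b4 + 36*b0*b0 + 21*b0*b0*b4 + 18*b0*b0*b3 + 9*b0*b0*b3*b4 + 21*b0*b0*b2 + 12*b0*b0*b2*b4 + 12*b0*b0*b2*b3 + 6*b0*b0*b2*b3*b4 + 27*b0*b0*b1 + 15*b0*b0*b1*b4 + 12*b0*b0*b1*b3 + 6*b0*b0*b1*b3*b4 + 21*b0*b0*b1*b2 +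 12*b0*b0*b1*b2*b4 + 12*b0*b0*b1*b2*b3 + 6*b0*b0*b1*b2*b3*b4)" by simp
  ultimately show ?thesis by (rule eq_add_pos)
qed

lemma case_sszs:
  fixes a :: "nat \<Rightarrow> nat"
  assumes "a 0 = Suc b0" "a 1 = Suc b1" "a 2 = Suc b2" "a 3 = Suc b3" "a 4 = 0" "a 5 = Suc b5"
  shows "(9*(a 0+a 1+a 2+a 3+a 4+a 5)+15)*cntA a < totA a * (3*(a 0+a 1+a 2+a 3+a 4+a 5)+7)"
proof -
  have s1: "a (Suc 0) = Suc b1" using assms(2) by simp
  have "totA a * (3*(a 0+a 1+a 2+a 3+a 4+a 5)+7) = (9*(a 0+a 1+a 2+a 3+a 4+a 5)+15)*cntA a + (516 + 356*b5 + 33*b5*b5 + 322*b3 + 197*b3*b5 + 15*b3*b5*b5 + 30*b3*b3 + 15*b3*b3*b5 + 322*b2 + 219*b2*b5 + 18*b2*b5*b5 + 216*b2*b3 + 129*b2*b3*b5 + 9*b2*b3*b5*b5 + 18*b2*b3*b3 + 9*b2*b3*b3*b5 + 30*b2*b2 + 18*b2*b2*b5 + 18*b2*b2*b3 + 9*b2*b2*b3*b5 + 378*b1 + 253*b1*b5 + 21*b1*b5*b5 + 222*b1*b3 + 132*b1*b3*b5 + 9*b1*b3*b5*b5 + 18*b1*b3*b3 + 9*b1*b3*b3*b5 + 244*b1*b2 + 160*b1*b2*b5 + 12*b1*b2*b5*b5 + 157*b1*b2*b3 + 92*b1*b2*b3*b5 + 6*b1*b2*b3*b5*b5 + 12*b1*b2*b3*b3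 + 6*b1*b2*b3*b3*b5 + 21*b1*b2*b2 + 12*b1*b2*b2*b5 + 12*b1*b2*b2*b3 + 6*b1*b2*b2*b3*b5 + 36*b1*b1 + 21*b1*b1*b5 + 18*b1*b1*b3 + 9*b1*b1*b3*b5 + 21*b1*b1*b2 + 12*b1*b1*b2*b5 + 12*b1*b1*b2*b3 + 6*b1*b1*b2*b3*b5 + 378*b0 + 253*b0*b5 + 21*b0*b5*b5 + 222*b0*b3 + 132*b0*b3*b5 + 9*b0*b3*b5*b5 + 18*b0*b3*b3 + 9*b0*b3*b3*b5 + 244*b0*b2 + 160*b0*b2*b5 + 12*b0*b2*b5*b5 + 157*b0*b2*b3 + 92*b0*b2*b3*b5 + 6*b0*b2*b3*b5*b5 + 12*b0*b2*b3*b3 + 6*b0*b2*b3*b3*b5 + 21*b0*b2*b2 + 12*b0*b2*b2*b5 + 12*b0*b2*b2*b3 + 6*b0*b2*b2*b3*b5 + 306*b0*b1 + 197*b0*b1*b5 + 15*b0*b1*b5*b5 + 163*b0*b1*b3 + 95*b0*b1*b3*b5 + 6*b0*b1*b3*b5*b5 + 12*b0*b1*b3*b3 + 6*b0*b1*b3*b3*b5 + 247*b0*b1*b2 + 160*b0*b1*b2*b5 + 12*b0*b1*b2*b5*b5 + 157*b0*b1*b2*b3 + 92*b0*b1*b2*b3*b5 + 6*b0*b1*b2*b3*b5*b5 + 12*b0*b1*b2*b3*b3 + 6*b0*b1*b2*b3*b3*b5 + 21*b0*b1*b2*b2 + 12*b0*b1*b2*b2*b5 + 12*b0*b1*b2*b2*b3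 + 6*b0*b1*b2*b2*b3*b5 + 27*b0*b1*b1 + 15*b0*b1*b1*b5 + 12*b0*b1*b1*b3 + 6*b0*b1*b1*b3*b5 + 21*b0*b1*b1*b2 + 12*b0*b1*b1*b2*b5 + 12*b0*b1*b1*b2*b3 + 6*b0*b1*b1*b2*b3*b5 + 36*b0*b0 + 21*b0*b0*b5 + 18*b0*b0*b3 + 9*b0*b0*b3*b5 + 21*b0*b0*b2 + 12*b0*b0*b2*b5 + 12*b0*b0*b2*b3 + 6*b0*b0*b2*b3*b5 + 27*b0*b0*b1 + 15*b0*b0*b1*b5 + 12*b0*b0*b1*b3 + 6*b0*b0*b1*b3*b5 + 21*b0*b0*b1*b2 + 12*b0*b0*b1*b2*b5 + 12*b0*b0*b1*b2*b3 + 6*b0*b0*b1*b2*b3*b5)"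
    unfolding cntA_def totA_def NV_def
    apply (simp add: validV_def wV_def kV_def fac_def ind_def H_edges_def assms s1)
    by algebra
  moreover have "0 < (516 + 356*b5 + 33*b5*b5 + 322*b3 + 197*b3*b5 + 15*b3*b5*b5 + 30*b3*b3 + 15*b3*b3*b5 + 322*b2 + 219*b2*b5 + 18*b2*b5*b5 + 216*b2*b3 + 129*b2*b3*b5 + 9*b2*b3*b5*b5 + 18*b2*b3*b3 + 9*b2*b3*b3*b5 + 30*b2*b2 + 18*b2*b2*b5 + 18*b2*b2*b3 + 9*b2*b2*b3*b5 + 378*b1 + 253*b1*b5 + 21*b1*b5*b5 + 222*b1*b3 + 132*b1*b3*b5 + 9*b1*b3*b5*b5 + 18*b1*b3*b3 + 9*b1*b3*b3*b5 + 244*b1*b2 + 160*b1*b2*b5 + 12*b1*b2*b5*b5 + 157*b1*b2*b3 + 92*b1*b2*b3*b5 + 6*b1*b2*b3*b5*b5 + 12*b1*b2*b3*b3 + 6*b1*b2*b3*b3*b5 + 21*b1*b2*b2 + 12*b1*b2*b2*b5 + 12*b1*b2*b2*b3 + 6*b1*b2*b2*b3*b5 + 36*b1*b1 + 21*b1*b1*b5 + 18*b1*b1*b3 + 9*b1*b1*b3*b5 + 21*b1*b1*b2 + 12*b1*b1*b2*b5 + 12*b1*b1*b2*b3 + 6*b1*b1*b2*b3*b5 + 378*b0 + 253*b0*b5 + 21*b0*b5*b5 + 222*b0*b3 + 132*b0*b3*b5 + 9*b0*b3*b5*b5 + 18*b0*b3*b3 + 9*b0*b3*b3*b5 + 244*b0*b2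 + 160*b0*b2*b5 + 12*b0*b2*b5*b5 + 157*b0*b2*b3 + 92*b0*b2*b3*b5 + 6*b0*b2*b3*b5*b5 + 12*b0*b2*b3*b3 + 6*b0*b2*b3*b3*b5 + 21*b0*b2*b2 + 12*b0*b2*b2*b5 + 12*b0*b2*b2*b3 + 6*b0*b2*b2*b3*b5 + 306*b0*b1 + 197*b0*b1*b5 + 15*b0*b1*b5*b5 + 163*b0*b1*b3 + 95*b0*b1*b3*b5 + 6*b0*b1*b3*b5*b5 + 12*b0*b1*b3*b3 + 6*b0*b1*b3*b3*b5 + 247*b0*b1*b2 + 160*b0*b1*b2*b5 + 12*b0*b1*b2*b5*b5 + 157*b0*b1*b2*b3 + 92*b0*b1*b2*b3*b5 + 6*b0*b1*b2*b3*b5*b5 + 12*b0*b1*b2*b3*b3 + 6*b0*b1*b2*b3*b3*b5 + 21*b0*b1*b2*b2 + 12*b0*b1*b2*b2*b5 + 12*b0*b1*b2*b2*b3 + 6*b0*b1*b2*b2*b3*b5 + 27*b0*b1*b1 + 15*b0*b1*b1*b5 + 12*b0*b1*b1*b3 + 6*b0*b1*b1*b3*b5 + 21*b0*b1*b1*b2 + 12*b0*b1*b1*b2*b5 + 12*b0*b1*b1*b2*b3 + 6*b0*b1*b1*b2*b3*b5 + 36*b0*b0 + 21*b0*b0*b5 + 18*b0*b0*b3 + 9*b0*b0*b3*b5 + 21*b0*b0*b2 + 12*b0*b0*b2*b5 + 12*b0*b0*b2*b3 + 6*b0*b0*b2*b3*b5 + 27*b0*b0*b1 + 15*b0*b0*b1*b5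 + 12*b0*b0*b1*b3 + 6*b0*b0*b1*b3*b5 + 21*b0*b0*b1*b2 + 12*b0*b0*b1*b2*b5 + 12*b0*b0*b1*b2*b3 + 6*b0*b0*b1*b2*b3*b5)" by simp
  ultimately show ?thesis by (rule eq_add_pos)
qed

lemma case_sszz:
  fixes a :: "nat \<Rightarrow> nat"
  assumes "a 0 = Suc b0" "a 1 = Suc b1" "a 2 = Suc b2" "a 3 = Suc b3" "a 4 = 0" "a 5 = 0"
  shows "(9*(a 0+a 1+a 2+a 3+a 4+a 5)+15)*cntA a < totA a * (3*(a 0+a 1+a 2+a 3+a 4+a 5)+7)"
proof -
  have s1: "a (Suc 0) = Suc b1" using assms(2) by simp
  have "totA a * (3*(a 0+a 1+a 2+a 3+a 4+a 5)+7) = (9*(a 0+a 1+a 2+a 3+a 4+a 5)+15)*cntA a + (236 + 143*b3 + 15*b3*b3 + 155*b2 + 99*b2*b3 + 9*b2*b3*b3 + 15*b2*b2 + 9*b2*b2*b3 + 180*b1 + 102*b1*b3 + 9*b1*b3*b3 + 127*b1*b2 + 74*b1*b2*b3 + 6*b1*b2*b3*b3 + 12*b1*b2*b2 + 6*b1*b2*b2*b3 + 18*b1*b1 + 9*b1*b1*b3 + 12*b1*b1*b2 + 6*b1*b1*b2*b3 + 180*b0 + 102*b0*b3 + 9*b0*b3*b3 + 127*b0*b2 + 74*b0*b2*b3 + 6*b0*b2*b3*b3 + 12*b0*b2*b2 + 6*b0*b2*b2*b3 + 155*b0*b1 + 77*b0*b1*b3 + 6*b0*b1*b3*b3 + 133*b0*b1*b2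 + 74*b0*b1*b2*b3 + 6*b0*b1*b2*b3*b3 + 12*b0*b1*b2*b2 + 6*b0*b1*b2*b2*b3 + 15*b0*b1*b1 + 6*b0*b1*b1*b3 + 12*b0*b1*b1*b2 + 6*b0*b1*b1*b2*b3 + 18*b0*b0 + 9*b0*b0*b3 + 12*b0*b0*b2 + 6*b0*b0*b2*b3 + 15*b0*b0*b1 + 6*b0*b0*b1*b3 + 12*b0*b0*b1*b2 + 6*b0*b0*b1*b2*b3)"
    unfolding cntA_def totA_def NV_def
    apply (simp add: validV_def wV_def kV_def fac_def ind_def H_edges_def assms s1)
    by algebra
  moreover have "0 < (236 + 143*b3 + 15*b3*b3 + 155*b2 + 99*b2*b3 + 9*b2*b3*b3 + 15*b2*b2 + 9*b2*b2*b3 + 180*b1 + 102*b1*b3 + 9*b1*b3*b3 + 127*b1*b2 + 74*b1*b2*b3 + 6*b1*b2*b3*b3 + 12*b1*b2*b2 + 6*b1*b2*b2*b3 + 18*b1*b1 + 9*b1*b1*b3 + 12*b1*b1*b2 + 6*b1*b1*b2*b3 + 180*b0 + 102*b0*b3 + 9*b0*b3*b3 + 127*b0*b2 + 74*b0*b2*b3 + 6*b0*b2*b3*b3 + 12*b0*b2*b2 + 6*b0*b2*b2*b3 + 155*b0*b1 + 77*b0*b1*b3 + 6*b0*b1*b3*b3 + 133*b0*b1*b2 + 74*b0*b1*b2*b3 + 6*b0*b1*b2*b3*b3 + 12*b0*b1*b2*b2 + 6*b0*b1*b2*b2*b3 + 15*b0*b1*b1 + 6*b0*b1*b1*b3 +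 12*b0*b1*b1*b2 + 6*b0*b1*b1*b2*b3 + 18*b0*b0 + 9*b0*b0*b3 + 12*b0*b0*b2 + 6*b0*b0*b2*b3 + 15*b0*b0*b1 + 6*b0*b0*b1*b3 + 12*b0*b0*b1*b2 + 6*b0*b0*b1*b2*b3)" by simp
  ultimately show ?thesis by (rule eq_add_pos)
qed

lemma case_szss:
  fixes a :: "nat \<Rightarrow> nat"
  assumes "a 0 = Suc b0" "a 1 = 0" "a 2 = Suc b2" "a 3 = Suc b3" "a 4 = Suc b4" "a 5 = Suc b5"
  shows "(9*(a 0+a 1+a 2+a 3+a 4+a 5)+15)*cntA a < totA a * (3*(a 0+a 1+a 2+a 3+a 4+a 5)+7)"
proof -
  have s1: "a (Suc 0) = 0" using assms(2) by simp
  have "totA a * (3*(a 0+a 1+a 2+a 3+a 4+a 5)+7) = (9*(a 0+a 1+a 2+a 3+a 4+a 5)+15)*cntA a + (516 + 378*b5 + 36*b5*b5 + 378*b4 + 306*b4*b5 + 27*b4*b5*b5 + 36*b4*b4 + 27*b4*b4*b5 + 322*b3 + 244*b3*b5 + 21*b3*b5*b5 + 244*b3*b4 + 247*b3*b4*b5 + 21*b3*b4*b5*b5 + 21*b3*b4*b4 + 21*b3*b4*b4*b5 + 30*b3*b3 + 21*b3*b3*b5 + 21*b3*b3*b4 + 21*b3*b3*b4*b5 + 322*b2 + 222*b2*b5 + 18*b2*b5*b5 + 222*b2*b4 + 163*b2*b4*b5 + 12*b2*b4*b5*b5 + 18*b2*b4*b4 + 12*b2*b4*b4*b5 + 216*b2*b3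 + 157*b2*b3*b5 + 12*b2*b3*b5*b5 + 157*b2*b3*b4 + 157*b2*b3*b4*b5 + 12*b2*b3*b4*b5*b5 + 12*b2*b3*b4*b4 + 12*b2*b3*b4*b4*b5 + 18*b2*b3*b3 + 12*b2*b3*b3*b5 + 12*b2*b3*b3*b4 + 12*b2*b3*b3*b4*b5 + 30*b2*b2 + 18*b2*b2*b5 + 18*b2*b2*b4 + 12*b2*b2*b4*b5 + 18*b2*b2*b3 + 12*b2*b2*b3*b5 + 12*b2*b2*b3*b4 + 12*b2*b2*b3*b4*b5 + 356*b0 + 253*b0*b5 + 21*b0*b5*b5 + 253*b0*b4 + 197*b0*b4*b5 + 15*b0*b4*b5*b5 + 21*b0*b4*b4 + 15*b0*b4*b4*b5 + 219*b0*b3 + 160*b0*b3*b5 + 12*b0*b3*b5*b5 + 160*b0*b3*b4 + 160*b0*b3*b4*b5 + 12*b0*b3*b4*b5*b5 + 12*b0*b3*b4*b4 + 12*b0*b3*b4*b4*b5 + 18*b0*b3*b3 + 12*b0*b3*b3*b5 + 12*b0*b3*b3*b4 + 12*b0*b3*b3*b4*b5 + 197*b0*b2 + 132*b0*b2*b5 + 9*b0*b2*b5*b5 + 132*b0*b2*b4 + 95*b0*b2*b4*b5 + 6*b0*b2*b4*b5*b5 + 9*b0*b2*b4*b4 + 6*b0*b2*b4*b4*b5 + 129*b0*b2*b3 + 92*b0*b2*b3*b5 + 6*b0*b2*b3*b5*b5 + 92*b0*b2*b3*b4 + 92*b0*b2*b3*b4*b5 + 6*b0*b2*b3*b4*b5*b5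 + 6*b0*b2*b3*b4*b4 + 6*b0*b2*b3*b4*b4*b5 + 9*b0*b2*b3*b3 + 6*b0*b2*b3*b3*b5 + 6*b0*b2*b3*b3*b4 + 6*b0*b2*b3*b3*b4*b5 + 15*b0*b2*b2 + 9*b0*b2*b2*b5 + 9*b0*b2*b2*b4 + 6*b0*b2*b2*b4*b5 + 9*b0*b2*b2*b3 + 6*b0*b2*b2*b3*b5 + 6*b0*b2*b2*b3*b4 + 6*b0*b2*b2*b3*b4*b5 + 33*b0*b0 + 21*b0*b0*b5 + 21*b0*b0*b4 + 15*b0*b0*b4*b5 + 18*b0*b0*b3 + 12*b0*b0*b3*b5 + 12*b0*b0*b3*b4 + 12*b0*b0*b3*b4*b5 + 15*b0*b0*b2 + 9*b0*b0*b2*b5 + 9*b0*b0*b2*b4 + 6*b0*b0*b2*b4*b5 + 9*b0*b0*b2*b3 + 6*b0*b0*b2*b3*b5 + 6*b0*b0*b2*b3*b4 + 6*b0*b0*b2*b3*b4*b5)"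
    unfolding cntA_def totA_def NV_def
    apply (simp add: validV_def wV_def kV_def fac_def ind_def H_edges_def assms s1)
    by algebra
  moreover have "0 < (516 + 378*b5 + 36*b5*b5 + 378*b4 + 306*b4*b5 + 27*b4*b5*b5 + 36*b4*b4 + 27*b4*b4*b5 + 322*b3 + 244*b3*b5 + 21*b3*b5*b5 + 244*b3*b4 + 247*b3*b4*b5 + 21*b3*b4*b5*b5 + 21*b3*b4*b4 + 21*b3*b4*b4*b5 + 30*b3*b3 + 21*b3*b3*b5 + 21*b3*b3*b4 + 21*b3*b3*b4*b5 + 322*b2 + 222*b2*b5 + 18*b2*b5*b5 + 222*b2*b4 + 163*b2*b4*b5 + 12*b2*b4*b5*b5 + 18*b2*b4*b4 + 12*b2*b4*b4*b5 + 216*b2*b3 + 157*b2*b3*b5 + 12*b2*b3*b5*b5 + 157*b2*b3*b4 + 157*b2*b3*b4*b5 + 12*b2*b3*b4*b5*b5 + 12*b2*b3*b4*b4 + 12*b2*b3*b4*b4*b5 + 18*b2*b3*b3 + 12*b2*b3*b3*b5 + 12*b2*b3*b3*b4 + 12*b2*b3*b3*b4*b5 + 30*b2*b2 + 18*b2*b2*b5 + 18*b2*b2*b4 + 12*b2*b2*b4*b5 + 18*b2*b2*b3 + 12*b2*b2*b3*b5 + 12*b2*b2*b3*b4 + 12*b2*b2*b3*b4*b5 + 356*b0 + 253*b0*b5 + 21*b0*b5*b5 + 253*b0*b4 + 197*b0*b4*b5 + 15*b0*b4*b5*b5 + 21*b0*b4*b4 + 15*b0*b4*b4*b5 + 219*b0*b3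 + 160*b0*b3*b5 + 12*b0*b3*b5*b5 + 160*b0*b3*b4 + 160*b0*b3*b4*b5 + 12*b0*b3*b4*b5*b5 + 12*b0*b3*b4*b4 + 12*b0*b3*b4*b4*b5 + 18*b0*b3*b3 + 12*b0*b3*b3*b5 + 12*b0*b3*b3*b4 + 12*b0*b3*b3*b4*b5 + 197*b0*b2 + 132*b0*b2*b5 + 9*b0*b2*b5*b5 + 132*b0*b2*b4 + 95*b0*b2*b4*b5 + 6*b0*b2*b4*b5*b5 + 9*b0*b2*b4*b4 + 6*b0*b2*b4*b4*b5 + 129*b0*b2*b3 + 92*b0*b2*b3*b5 + 6*b0*b2*b3*b5*b5 + 92*b0*b2*b3*b4 + 92*b0*b2*b3*b4*b5 + 6*b0*b2*b3*b4*b5*b5 + 6*b0*b2*b3*b4*b4 + 6*b0*b2*b3*b4*b4*b5 + 9*b0*b2*b3*b3 + 6*b0*b2*b3*b3*b5 + 6*b0*b2*b3*b3*b4 + 6*b0*b2*b3*b3*b4*b5 + 15*b0*b2*b2 + 9*b0*b2*b2*b5 + 9*b0*b2*b2*b4 + 6*b0*b2*b2*b4*b5 + 9*b0*b2*b2*b3 + 6*b0*b2*b2*b3*b5 + 6*b0*b2*b2*b3*b4 + 6*b0*b2*b2*b3*b4*b5 + 33*b0*b0 + 21*b0*b0*b5 + 21*b0*b0*b4 + 15*b0*b0*b4*b5 + 18*b0*b0*b3 + 12*b0*b0*b3*b5 + 12*b0*b0*b3*b4 + 12*b0*b0*b3*b4*b5 + 15*b0*b0*b2 + 9*b0*b0*b2*b5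 + 9*b0*b0*b2*b4 + 6*b0*b0*b2*b4*b5 + 9*b0*b0*b2*b3 + 6*b0*b0*b2*b3*b5 + 6*b0*b0*b2*b3*b4 + 6*b0*b0*b2*b3*b4*b5)" by simp
  ultimately show ?thesis by (rule eq_add_pos)
qed

lemma case_szsz:
  fixes a :: "nat \<Rightarrow> nat"
  assumes "a 0 = Suc b0" "a 1 = 0" "a 2 = Suc b2" "a 3 = Suc b3" "a 4 = Suc b4" "a 5 = 0"
  shows "(9*(a 0+a 1+a 2+a 3+a 4+a 5)+15)*cntA a < totA a * (3*(a 0+a 1+a 2+a 3+a 4+a 5)+7)"
proof -
  have s1: "a (Suc 0) = 0" using assms(2) by simp
  have "totA a * (3*(a 0+a 1+a 2+a 3+a 4+a 5)+7) = (9*(a 0+a 1+a 2+a 3+a 4+a 5)+15)*cntA a + (272 + 198*b4 + 18*b4*b4 + 186*b3 + 117*b3*b4 + 9*b3*b4*b4 + 18*b3*b3 + 9*b3*b3*b4 + 186*b2 + 136*b2*b4 + 12*b2*b4*b4 + 136*b2*b3 + 83*b2*b3*b4 + 6*b2*b3*b4*b4 + 12*b2*b3*b3 + 6*b2*b3*b3*b4 + 18*b2*b2 + 12*b2*b2*b4 + 12*b2*b2*b3 + 6*b2*b2*b3*b4 + 198*b0 + 142*b0*b4 + 12*b0*b4*b4 + 136*b0*b3 + 83*b0*b3*b4 + 6*b0*b3*b4*b4 + 12*b0*b3*b3 + 6*b0*b3*b3*b4 + 117*b0*b2 + 83*b0*b2*b4 + 6*b0*b2*b4*b4 + 83*b0*b2*b3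 + 49*b0*b2*b3*b4 + 3*b0*b2*b3*b4*b4 + 6*b0*b2*b3*b3 + 3*b0*b2*b3*b3*b4 + 9*b0*b2*b2 + 6*b0*b2*b2*b4 + 6*b0*b2*b2*b3 + 3*b0*b2*b2*b3*b4 + 18*b0*b0 + 12*b0*b0*b4 + 12*b0*b0*b3 + 6*b0*b0*b3*b4 + 9*b0*b0*b2 + 6*b0*b0*b2*b4 + 6*b0*b0*b2*b3 + 3*b0*b0*b2*b3*b4)"
    unfolding cntA_def totA_def NV_def
    apply (simp add: validV_def wV_def kV_def fac_def ind_def H_edges_def assms s1)
    by algebra
  moreover have "0 < (272 + 198*b4 + 18*b4*b4 + 186*b3 + 117*b3*b4 + 9*b3*b4*b4 + 18*b3*b3 + 9*b3*b3*b4 + 186*b2 + 136*b2*b4 + 12*b2*b4*b4 + 136*b2*b3 + 83*b2*b3*b4 + 6*b2*b3*b4*b4 + 12*b2*b3*b3 + 6*b2*b3*b3*b4 + 18*b2*b2 + 12*b2*b2*b4 + 12*b2*b2*b3 + 6*b2*b2*b3*b4 + 198*b0 + 142*b0*b4 + 12*b0*b4*b4 + 136*b0*b3 + 83*b0*b3*b4 + 6*b0*b3*b4*b4 + 12*b0*b3*b3 + 6*b0*b3*b3*b4 + 117*b0*b2 + 83*b0*b2*b4 + 6*b0*b2*b4*b4 + 83*b0*b2*b3 + 49*b0*b2*b3*b4 + 3*b0*b2*b3*b4*b4 + 6*b0*b2*b3*b3 + 3*b0*b2*b3*b3*b4 + 9*b0*b2*b2 + 6*b0*b2*b2*b4 +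 6*b0*b2*b2*b3 + 3*b0*b2*b2*b3*b4 + 18*b0*b0 + 12*b0*b0*b4 + 12*b0*b0*b3 + 6*b0*b0*b3*b4 + 9*b0*b0*b2 + 6*b0*b0*b2*b4 + 6*b0*b0*b2*b3 + 3*b0*b0*b2*b3*b4)" by simp
  ultimately show ?thesis by (rule eq_add_pos)
qed

lemma case_szzs:
  fixes a :: "nat \<Rightarrow> nat"
  assumes "a 0 = Suc b0" "a 1 = 0" "a 2 = Suc b2" "a 3 = Suc b3" "a 4 = 0" "a 5 = Suc b5"
  shows "(9*(a 0+a 1+a 2+a 3+a 4+a 5)+15)*cntA a < totA a * (3*(a 0+a 1+a 2+a 3+a 4+a 5)+7)"
proof -
  have s1: "a (Suc 0) = 0" using assms(2) by simp
  have "totA a * (3*(a 0+a 1+a 2+a 3+a 4+a 5)+7) = (9*(a 0+a 1+a 2+a 3+a 4+a 5)+15)*cntA a + (272 + 198*b5 + 18*b5*b5 + 186*b3 + 117*b3*b5 + 9*b3*b5*b5 + 18*b3*b3 + 9*b3*b3*b5 + 186*b2 + 136*b2*b5 + 12*b2*b5*b5 + 136*b2*b3 + 83*b2*b3*b5 + 6*b2*b3*b5*b5 + 12*b2*b3*b3 + 6*b2*b3*b3*b5 + 18*b2*b2 + 12*b2*b2*b5 + 12*b2*b2*b3 + 6*b2*b2*b3*b5 + 198*b0 + 142*b0*b5 + 12*b0*b5*b5 + 136*b0*b3 + 83*b0*b3*b5 + 6*b0*b3*b5*b5 + 12*b0*b3*b3 + 6*b0*b3*b3*b5 + 117*b0*b2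 + 83*b0*b2*b5 + 6*b0*b2*b5*b5 + 83*b0*b2*b3 + 49*b0*b2*b3*b5 + 3*b0*b2*b3*b5*b5 + 6*b0*b2*b3*b3 + 3*b0*b2*b3*b3*b5 + 9*b0*b2*b2 + 6*b0*b2*b2*b5 + 6*b0*b2*b2*b3 + 3*b0*b2*b2*b3*b5 + 18*b0*b0 + 12*b0*b0*b5 + 12*b0*b0*b3 + 6*b0*b0*b3*b5 + 9*b0*b0*b2 + 6*b0*b0*b2*b5 + 6*b0*b0*b2*b3 + 3*b0*b0*b2*b3*b5)"
    unfolding cntA_def totA_def NV_def
    apply (simp add: validV_def wV_def kV_def fac_def ind_def H_edges_def assms s1)
    by algebra
  moreover have "0 < (272 + 198*b5 + 18*b5*b5 + 186*b3 + 117*b3*b5 + 9*b3*b5*b5 + 18*b3*b3 + 9*b3*b3*b5 + 186*b2 + 136*b2*b5 + 12*b2*b5*b5 + 136*b2*b3 + 83*b2*b3*b5 + 6*b2*b3*b5*b5 + 12*b2*b3*b3 + 6*b2*b3*b3*b5 + 18*b2*b2 + 12*b2*b2*b5 + 12*b2*b2*b3 + 6*b2*b2*b3*b5 + 198*b0 + 142*b0*b5 + 12*b0*b5*b5 + 136*b0*b3 + 83*b0*b3*b5 + 6*b0*b3*b5*b5 + 12*b0*b3*b3 + 6*b0*b3*b3*b5 + 117*b0*b2 + 83*b0*b2*b5 + 6*b0*b2*b5*b5 + 83*b0*b2*b3 + 49*b0*b2*b3*b5 + 3*b0*b2*b3*b5*b5 + 6*b0*b2*b3*b3 + 3*b0*b2*b3*b3*b5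 + 9*b0*b2*b2 + 6*b0*b2*b2*b5 + 6*b0*b2*b2*b3 + 3*b0*b2*b2*b3*b5 + 18*b0*b0 + 12*b0*b0*b5 + 12*b0*b0*b3 + 6*b0*b0*b3*b5 + 9*b0*b0*b2 + 6*b0*b0*b2*b5 + 6*b0*b0*b2*b3 + 3*b0*b0*b2*b3*b5)" by simp
  ultimately show ?thesis by (rule eq_add_pos)
qed

lemma case_szzz:
  fixes a :: "nat \<Rightarrow> nat"
  assumes "a 0 = Suc b0" "a 1 = 0" "a 2 = Suc b2" "a 3 = Suc b3" "a 4 = 0" "a 5 = 0"
  shows "(9*(a 0+a 1+a 2+a 3+a 4+a 5)+15)*cntA a < totA a * (3*(a 0+a 1+a 2+a 3+a 4+a 5)+7)"
proof -
  have s1: "a (Suc 0) = 0" using assms(2) by simp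
  have "totA a * (3*(a 0+a 1+a 2+a 3+a 4+a 5)+7) = (9*(a 0+a 1+a 2+a 3+a 4+a 5)+15)*cntA a + (100 + 75*b3 + 9*b3*b3 + 71*b2 + 59*b2*b3 + 6*b2*b3*b3 + 6*b2*b2 + 6*b2*b2*b3 + 77*b0 + 59*b0*b3 + 6*b0*b3*b3 + 46*b0*b2 + 37*b0*b2*b3 + 3*b0*b2*b3*b3 + 3*b0*b2*b2 + 3*b0*b2*b2*b3 + 6*b0*b0 + 6*b0*b0*b3 + 3*b0*b0*b2 + 3*b0*b0*b2*b3)"
    unfolding cntA_def totA_def NV_def
    apply (simp add: validV_def wV_def kV_def fac_def ind_def H_edges_def assms s1)
    by algebra
  moreover have "0 < (100 + 75*b3 + 9*b3*b3 + 71*b2 + 59*b2*b3 + 6*b2*b3*b3 + 6*b2*b2 + 6*b2*b2*b3 + 77*b0 + 59*b0*b3 + 6*b0*b3*b3 + 46*b0*b2 + 37*b0*b2*b3 + 3*b0*b2*b3*b3 + 3*b0*b2*b2 + 3*b0*b2*b2*b3 + 6*b0*b0 + 6*b0*b0*b3 + 3*b0*b0*b2 + 3*b0*b0*b2*b3)" by simp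
  ultimately show ?thesis by (rule eq_add_pos)
qed

lemma case_zsss:
  fixes a :: "nat \<Rightarrow> nat"
  assumes "a 0 = 0" "a 1 = Suc b1" "a 2 = Suc b2" "a 3 = Suc b3" "a 4 = Suc b4" "a 5 = Suc b5"
  shows "(9*(a 0+a 1+a 2+a 3+a 4+a 5)+15)*cntA a < totA a * (3*(a 0+a 1+a 2+a 3+a 4+a 5)+7)"
proof -
  have s1: "a (Suc 0) = Suc b1" using assms(2) by simp
  have "totA a * (3*(a 0+a 1+a 2+a 3+a 4+a 5)+7) = (9*(a 0+a 1+a 2+a 3+a 4+a 5)+15)*cntA a + (516 + 378*b5 + 36*b5*b5 + 378*b4 + 306*b4*b5 + 27*b4*b5*b5 + 36*b4*b4 + 27*b4*b4*b5 + 322*b3 + 244*b3*b5 + 21*b3*b5*b5 + 244*b3*b4 + 247*b3*b4*b5 + 21*b3*b4*b5*b5 + 21*b3*b4*b4 + 21*b3*b4*b4*b5 + 30*b3*b3 + 21*b3*b3*b5 + 21*b3*b3*b4 + 21*b3*b3*b4*b5 + 322*b2 + 222*b2*b5 + 18*b2*b5*b5 + 222*b2*b4 + 163*b2*b4*b5 + 12*b2*b4*b5*b5 + 18*b2*b4*b4 + 12*b2*b4*b4*b5 + 216*b2*b3 + 157*b2*b3*b5 + 12*b2*b3*b5*b5 + 157*b2*b3*b4 + 157*b2*b3*b4*b5 + 12*b2*b3*b4*b5*b5 + 12*b2*b3*b4*b4 + 12*b2*b3*b4*b4*b5 + 18*b2*b3*b3 + 12*b2*b3*b3*b5 + 12*b2*b3*b3*b4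 + 12*b2*b3*b3*b4*b5 + 30*b2*b2 + 18*b2*b2*b5 + 18*b2*b2*b4 + 12*b2*b2*b4*b5 + 18*b2*b2*b3 + 12*b2*b2*b3*b5 + 12*b2*b2*b3*b4 + 12*b2*b2*b3*b4*b5 + 356*b1 + 253*b1*b5 + 21*b1*b5*b5 + 253*b1*b4 + 197*b1*b4*b5 + 15*b1*b4*b5*b5 + 21*b1*b4*b4 + 15*b1*b4*b4*b5 + 219*b1*b3 + 160*b1*b3*b5 + 12*b1*b3*b5*b5 + 160*b1*b3*b4 + 160*b1*b3*b4*b5 + 12*b1*b3*b4*b5*b5 + 12*b1*b3*b4*b4 + 12*b1*b3*b4*b4*b5 + 18*b1*b3*b3 + 12*b1*b3*b3*b5 + 12*b1*b3*b3*b4 + 12*b1*b3*b3*b4*b5 + 197*b1*b2 + 132*b1*b2*b5 + 9*b1*b2*b5*b5 + 132*b1*b2*b4 + 95*b1*b2*b4*b5 + 6*b1*b2*b4*b5*b5 + 9*b1*b2*b4*b4 + 6*b1*b2*b4*b4*b5 + 129*b1*b2*b3 + 92*b1*b2*b3*b5 + 6*b1*b2*b3*b5*b5 + 92*b1*b2*b3*b4 + 92*b1*b2*b3*b4*b5 + 6*b1*b2*b3*b4*b5*b5 + 6*b1*b2*b3*b4*b4 + 6*b1*b2*b3*b4*b4*b5 + 9*b1*b2*b3*b3 + 6*b1*b2*b3*b3*b5 + 6*b1*b2*b3*b3*b4 + 6*b1*b2*b3*b3*b4*b5 + 15*b1*b2*b2 + 9*b1*b2*b2*b5 + 9*b1*b2*b2*b4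 + 6*b1*b2*b2*b4*b5 + 9*b1*b2*b2*b3 + 6*b1*b2*b2*b3*b5 + 6*b1*b2*b2*b3*b4 + 6*b1*b2*b2*b3*b4*b5 + 33*b1*b1 + 21*b1*b1*b5 + 21*b1*b1*b4 + 15*b1*b1*b4*b5 + 18*b1*b1*b3 + 12*b1*b1*b3*b5 + 12*b1*b1*b3*b4 + 12*b1*b1*b3*b4*b5 + 15*b1*b1*b2 + 9*b1*b1*b2*b5 + 9*b1*b1*b2*b4 + 6*b1*b1*b2*b4*b5 + 9*b1*b1*b2*b3 + 6*b1*b1*b2*b3*b5 + 6*b1*b1*b2*b3*b4 + 6*b1*b1*b2*b3*b4*b5)"
    unfolding cntA_def totA_def NV_def
    apply (simp add: validV_def wV_def kV_def fac_def ind_def H_edges_def assms s1)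
    by algebra
  moreover have "0 < (516 + 378*b5 + 36*b5*b5 + 378*b4 + 306*b4*b5 + 27*b4*b5*b5 + 36*b4*b4 + 27*b4*b4*b5 + 322*b3 + 244*b3*b5 + 21*b3*b5*b5 + 244*b3*b4 + 247*b3*b4*b5 + 21*b3*b4*b5*b5 + 21*b3*b4*b4 + 21*b3*b4*b4*b5 + 30*b3*b3 + 21*b3*b3*b5 + 21*b3*b3*b4 + 21*b3*b3*b4*b5 + 322*b2 + 222*b2*b5 + 18*b2*b5*b5 + 222*b2*b4 + 163*b2*b4*b5 + 12*b2*b4*b5*b5 + 18*b2*b4*b4 + 12*b2*b4*b4*b5 + 216*b2*b3 + 157*b2*b3*b5 + 12*b2*b3*b5*b5 + 157*b2*b3*b4 + 157*b2*b3*b4*b5 + 12*b2*b3*b4*b5*b5 + 12*b2*b3*b4*b4 + 12*b2*b3*b4*b4*b5 + 18*b2*b3*b3 + 12*b2*b3*b3*b5 + 12*b2*b3*b3*b4 + 12*b2*b3*b3*b4*b5 + 30*b2*b2 + 18*b2*b2*b5 + 18*b2*b2*b4 + 12*b2*b2*b4*b5 + 18*b2*b2*b3 + 12*b2*b2*b3*b5 + 12*b2*b2*b3*b4 + 12*b2*b2*b3*b4*b5 + 356*b1 + 253*b1*b5 + 21*b1*b5*b5 + 253*b1*b4 + 197*b1*b4*b5 + 15*b1*b4*b5*b5 + 21*b1*b4*b4 + 15*b1*b4*b4*b5 + 219*b1*b3 + 160*b1*b3*b5 + 12*b1*b3*b5*b5 + 160*b1*b3*b4 + 160*b1*b3*b4*b5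 + 12*b1*b3*b4*b5*b5 + 12*b1*b3*b4*b4 + 12*b1*b3*b4*b4*b5 + 18*b1*b3*b3 + 12*b1*b3*b3*b5 + 12*b1*b3*b3*b4 + 12*b1*b3*b3*b4*b5 + 197*b1*b2 + 132*b1*b2*b5 + 9*b1*b2*b5*b5 + 132*b1*b2*b4 + 95*b1*b2*b4*b5 + 6*b1*b2*b4*b5*b5 + 9*b1*b2*b4*b4 + 6*b1*b2*b4*b4*b5 + 129*b1*b2*b3 + 92*b1*b2*b3*b5 + 6*b1*b2*b3*b5*b5 + 92*b1*b2*b3*b4 + 92*b1*b2*b3*b4*b5 + 6*b1*b2*b3*b4*b5*b5 + 6*b1*b2*b3*b4*b4 + 6*b1*b2*b3*b4*b4*b5 + 9*b1*b2*b3*b3 + 6*b1*b2*b3*b3*b5 + 6*b1*b2*b3*b3*b4 + 6*b1*b2*b3*b3*b4*b5 + 15*b1*b2*b2 + 9*b1*b2*b2*b5 + 9*b1*b2*b2*b4 + 6*b1*b2*b2*b4*b5 + 9*b1*b2*b2*b3 + 6*b1*b2*b2*b3*b5 + 6*b1*b2*b2*b3*b4 + 6*b1*b2*b2*b3*b4*b5 + 33*b1*b1 + 21*b1*b1*b5 + 21*b1*b1*b4 + 15*b1*b1*b4*b5 + 18*b1*b1*b3 + 12*b1*b1*b3*b5 + 12*b1*b1*b3*b4 + 12*b1*b1*b3*b4*b5 + 15*b1*b1*b2 + 9*b1*b1*b2*b5 + 9*b1*b1*b2*b4 + 6*b1*b1*b2*b4*b5 + 9*b1*b1*b2*b3 +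 6*b1*b1*b2*b3*b5 + 6*b1*b1*b2*b3*b4 + 6*b1*b1*b2*b3*b4*b5)" by simp
  ultimately show ?thesis by (rule eq_add_pos)
qed

lemma case_zssz:
  fixes a :: "nat \<Rightarrow> nat"
  assumes "a 0 = 0" "a 1 = Suc b1" "a 2 = Suc b2" "a 3 = Suc b3" "a 4 = Suc b4" "a 5 = 0"
  shows "(9*(a 0+a 1+a 2+a 3+a 4+a 5)+15)*cntA a < totA a * (3*(a 0+a 1+a 2+a 3+a 4+a 5)+7)"
proof -
  have s1: "a (Suc 0) = Suc b1" using assms(2) by simp
  have "totA a * (3*(a 0+a 1+a 2+a 3+a 4+a 5)+7) = (9*(a 0+a 1+a 2+a 3+a 4+a 5)+15)*cntA a + (272 + 198*b4 + 18*b4*b4 + 186*b3 + 117*b3*b4 + 9*b3*b4*b4 + 18*b3*b3 + 9*b3*b3*b4 + 186*b2 + 136*b2*b4 + 12*b2*b4*b4 + 136*b2*b3 + 83*b2*b3*b4 + 6*b2*b3*b4*b4 + 12*b2*b3*b3 + 6*b2*b3*b3*b4 + 18*b2*b2 + 12*b2*b2*b4 + 12*b2*b2*b3 + 6*b2*b2*b3*b4 + 198*b1 + 142*b1*b4 + 12*b1*b4*b4 + 136*b1*b3 + 83*b1*b3*b4 + 6*b1*b3*b4*b4 + 12*b1*b3*b3 + 6*b1*b3*b3*b4 + 117*b1*b2 + 83*b1*b2*b4 + 6*b1*b2*b4*b4 + 83*b1*b2*b3 + 49*b1*b2*b3*b4 + 3*b1*b2*b3*b4*b4 + 6*b1*b2*b3*b3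 + 3*b1*b2*b3*b3*b4 + 9*b1*b2*b2 + 6*b1*b2*b2*b4 + 6*b1*b2*b2*b3 + 3*b1*b2*b2*b3*b4 + 18*b1*b1 + 12*b1*b1*b4 + 12*b1*b1*b3 + 6*b1*b1*b3*b4 + 9*b1*b1*b2 + 6*b1*b1*b2*b4 + 6*b1*b1*b2*b3 + 3*b1*b1*b2*b3*b4)"
    unfolding cntA_def totA_def NV_def
    apply (simp add: validV_def wV_def kV_def fac_def ind_def H_edges_def assms s1)
    by algebra
  moreover have "0 < (272 + 198*b4 + 18*b4*b4 + 186*b3 + 117*b3*b4 + 9*b3*b4*b4 + 18*b3*b3 + 9*b3*b3*b4 + 186*b2 + 136*b2*b4 + 12*b2*b4*b4 + 136*b2*b3 + 83*b2*b3*b4 + 6*b2*b3*b4*b4 + 12*b2*b3*b3 + 6*b2*b3*b3*b4 + 18*b2*b2 + 12*b2*b2*b4 + 12*b2*b2*b3 + 6*b2*b2*b3*b4 + 198*b1 + 142*b1*b4 + 12*b1*b4*b4 + 136*b1*b3 + 83*b1*b3*b4 + 6*b1*b3*b4*b4 + 12*b1*b3*b3 + 6*b1*b3*b3*b4 + 117*b1*b2 + 83*b1*b2*b4 + 6*b1*b2*b4*b4 + 83*b1*b2*b3 + 49*b1*b2*b3*b4 + 3*b1*b2*b3*b4*b4 + 6*b1*b2*b3*b3 + 3*b1*b2*b3*b3*b4 + 9*b1*b2*b2 + 6*b1*b2*b2*b4 + 6*b1*b2*b2*b3 + 3*b1*b2*b2*b3*b4 + 18*b1*b1 + 12*b1*b1*b4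 + 12*b1*b1*b3 + 6*b1*b1*b3*b4 + 9*b1*b1*b2 + 6*b1*b1*b2*b4 + 6*b1*b1*b2*b3 + 3*b1*b1*b2*b3*b4)" by simp
  ultimately show ?thesis by (rule eq_add_pos)
qed

lemma case_zszs:
  fixes a :: "nat \<Rightarrow> nat"
  assumes "a 0 = 0" "a 1 = Suc b1" "a 2 = Suc b2" "a 3 = Suc b3" "a 4 = 0" "a 5 = Suc b5"
  shows "(9*(a 0+a 1+a 2+a 3+a 4+a 5)+15)*cntA a < totA a * (3*(a 0+a 1+a 2+a 3+a 4+a 5)+7)"
proof -
  have s1: "a (Suc 0) = Suc b1" using assms(2) by simp
  have "totA a * (3*(a 0+a 1+a 2+a 3+a 4+a 5)+7) = (9*(a 0+a 1+a 2+a 3+a 4+a 5)+15)*cntA a + (272 + 198*b5 + 18*b5*b5 + 186*b3 + 117*b3*b5 + 9*b3*b5*b5 + 18*b3*b3 + 9*b3*b3*b5 + 186*b2 + 136*b2*b5 + 12*b2*b5*b5 + 136*b2*b3 + 83*b2*b3*b5 + 6*b2*b3*b5*b5 + 12*b2*b3*b3 + 6*b2*b3*b3*b5 + 18*b2*b2 + 12*b2*b2*b5 + 12*b2*b2*b3 + 6*b2*b2*b3*b5 + 198*b1 + 142*b1*b5 + 12*b1*b5*b5 + 136*b1*b3 + 83*b1*b3*b5 + 6*b1*b3*b5*b5 + 12*b1*b3*b3 + 6*b1*b3*b3*b5 + 117*b1*b2 + 83*b1*b2*b5 + 6*b1*b2*b5*b5 + 83*b1*b2*b3 + 49*b1*b2*b3*b5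 + 3*b1*b2*b3*b5*b5 + 6*b1*b2*b3*b3 + 3*b1*b2*b3*b3*b5 + 9*b1*b2*b2 + 6*b1*b2*b2*b5 + 6*b1*b2*b2*b3 + 3*b1*b2*b2*b3*b5 + 18*b1*b1 + 12*b1*b1*b5 + 12*b1*b1*b3 + 6*b1*b1*b3*b5 + 9*b1*b1*b2 + 6*b1*b1*b2*b5 + 6*b1*b1*b2*b3 + 3*b1*b1*b2*b3*b5)"
    unfolding cntA_def totA_def NV_def
    apply (simp add: validV_def wV_def kV_def fac_def ind_def H_edges_def assms s1)
    by algebra
  moreover have "0 < (272 + 198*b5 + 18*b5*b5 + 186*b3 + 117*b3*b5 + 9*b3*b5*b5 + 18*b3*b3 + 9*b3*b3*b5 + 186*b2 + 136*b2*b5 + 12*b2*b5*b5 + 136*b2*b3 + 83*b2*b3*b5 + 6*b2*b3*b5*b5 + 12*b2*b3*b3 + 6*b2*b3*b3*b5 + 18*b2*b2 + 12*b2*b2*b5 + 12*b2*b2*b3 + 6*b2*b2*b3*b5 + 198*b1 + 142*b1*b5 + 12*b1*b5*b5 + 136*b1*b3 + 83*b1*b3*b5 + 6*b1*b3*b5*b5 + 12*b1*b3*b3 + 6*b1*b3*b3*b5 + 117*b1*b2 + 83*b1*b2*b5 + 6*b1*b2*b5*b5 + 83*b1*b2*b3 + 49*b1*b2*b3*b5 + 3*b1*b2*b3*b5*b5 + 6*b1*b2*b3*b3 + 3*b1*b2*b3*b3*b5 + 9*b1*b2*b2 + 6*b1*b2*b2*b5 + 6*b1*b2*b2*b3 +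 3*b1*b2*b2*b3*b5 + 18*b1*b1 + 12*b1*b1*b5 + 12*b1*b1*b3 + 6*b1*b1*b3*b5 + 9*b1*b1*b2 + 6*b1*b1*b2*b5 + 6*b1*b1*b2*b3 + 3*b1*b1*b2*b3*b5)" by simp
  ultimately show ?thesis by (rule eq_add_pos)
qed

lemma case_zszz:
  fixes a :: "nat \<Rightarrow> nat"
  assumes "a 0 = 0" "a 1 = Suc b1" "a 2 = Suc b2" "a 3 = Suc b3" "a 4 = 0" "a 5 = 0"
  shows "(9*(a 0+a 1+a 2+a 3+a 4+a 5)+15)*cntA a < totA a * (3*(a 0+a 1+a 2+a 3+a 4+a 5)+7)"
proof -
  have s1: "a (Suc 0) = Suc b1" using assms(2) by simp
  have "totA a * (3*(a 0+a 1+a 2+a 3+a 4+a 5)+7) = (9*(a 0+a 1+a 2+a 3+a 4+a 5)+15)*cntA a + (100 + 75*b3 + 9*b3*b3 + 71*b2 + 59*b2*b3 + 6*b2*b3*b3 + 6*b2*b2 + 6*b2*b2*b3 + 77*b1 + 59*b1*b3 + 6*b1*b3*b3 + 46*b1*b2 + 37*b1*b2*b3 + 3*b1*b2*b3*b3 + 3*b1*b2*b2 + 3*b1*b2*b2*b3 + 6*b1*b1 + 6*b1*b1*b3 + 3*b1*b1*b2 + 3*b1*b1*b2*b3)"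
    unfolding cntA_def totA_def NV_def
    apply (simp add: validV_def wV_def kV_def fac_def ind_def H_edges_def assms s1)
    by algebra
  moreover have "0 < (100 + 75*b3 + 9*b3*b3 + 71*b2 + 59*b2*b3 + 6*b2*b3*b3 + 6*b2*b2 + 6*b2*b2*b3 + 77*b1 + 59*b1*b3 + 6*b1*b3*b3 + 46*b1*b2 + 37*b1*b2*b3 + 3*b1*b2*b3*b3 + 3*b1*b2*b2 + 3*b1*b2*b2*b3 + 6*b1*b1 + 6*b1*b1*b3 + 3*b1*b1*b2 + 3*b1*b1*b2*b3)" by simp
  ultimately show ?thesis by (rule eq_add_pos)
qed

lemma case_zzss:
  fixes a :: "nat \<Rightarrow> nat"
  assumes "a 0 = 0" "a 1 = 0" "a 2 = Suc b2" "a 3 = Suc b3" "a 4 = Suc b4" "a 5 = Suc b5"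
  shows "(9*(a 0+a 1+a 2+a 3+a 4+a 5)+15)*cntA a < totA a * (3*(a 0+a 1+a 2+a 3+a 4+a 5)+7)"
proof -
  have s1: "a (Suc 0) = 0" using assms(2) by simp
  have "totA a * (3*(a 0+a 1+a 2+a 3+a 4+a 5)+7) = (9*(a 0+a 1+a 2+a 3+a 4+a 5)+15)*cntA a + (236 + 180*b5 + 18*b5*b5 + 180*b4 + 155*b4*b5 + 15*b4*b5*b5 + 18*b4*b4 + 15*b4*b4*b5 + 155*b3 + 127*b3*b5 + 12*b3*b5*b5 + 127*b3*b4 + 133*b3*b4*b5 + 12*b3*b4*b5*b5 + 12*b3*b4*b4 + 12*b3*b4*b4*b5 + 15*b3*b3 + 12*b3*b3*b5 + 12*b3*b3*b4 + 12*b3*b3*b4*b5 + 143*b2 + 102*b2*b5 + 9*b2*b5*b5 + 102*b2*b4 + 77*b2*b4*b5 + 6*b2*b4*b5*b5 + 9*b2*b4*b4 + 6*b2*b4*b4*b5 + 99*b2*b3 + 74*b2*b3*b5 + 6*b2*b3*b5*b5 + 74*b2*b3*b4 + 74*b2*b3*b4*b5 + 6*b2*b3*b4*b5*b5 + 6*b2*b3*b4*b4 + 6*b2*b3*b4*b4*b5 + 9*b2*b3*b3 + 6*b2*b3*b3*b5 + 6*b2*b3*b3*b4 + 6*b2*b3*b3*b4*b5 + 15*b2*b2 + 9*b2*b2*b5 + 9*b2*b2*b4 + 6*b2*b2*b4*b5 + 9*b2*b2*b3 + 6*b2*b2*b3*b5 + 6*b2*b2*b3*b4 + 6*b2*b2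*b3*b4*b5)"
    unfolding cntA_def totA_def NV_def
    apply (simp add: validV_def wV_def kV_def fac_def ind_def H_edges_def assms s1)
    by algebra
  moreover have "0 < (236 + 180*b5 + 18*b5*b5 + 180*b4 + 155*b4*b5 + 15*b4*b5*b5 + 18*b4*b4 + 15*b4*b4*b5 + 155*b3 + 127*b3*b5 + 12*b3*b5*b5 + 127*b3*b4 + 133*b3*b4*b5 + 12*b3*b4*b5*b5 + 12*b3*b4*b4 + 12*b3*b4*b4*b5 + 15*b3*b3 + 12*b3*b3*b5 + 12*b3*b3*b4 + 12*b3*b3*b4*b5 + 143*b2 + 102*b2*b5 + 9*b2*b5*b5 + 102*b2*b4 + 77*b2*b4*b5 + 6*b2*b4*b5*b5 + 9*b2*b4*b4 + 6*b2*b4*b4*b5 + 99*b2*b3 + 74*b2*b3*b5 + 6*b2*b3*b5*b5 + 74*b2*b3*b4 + 74*b2*b3*b4*b5 + 6*b2*b3*b4*b5*b5 + 6*b2*b3*b4*b4 + 6*b2*b3*b4*b4*b5 + 9*b2*b3*b3 + 6*b2*b3*b3*b5 + 6*b2*b3*b3*b4 + 6*b2*b3*b3*b4*b5 + 15*b2*b2 + 9*b2*b2*b5 + 9*b2*b2*b4 + 6*b2*b2*b4*b5 + 9*b2*b2*b3 + 6*b2*b2*b3*b5 + 6*b2*b2*b3*b4 + 6*b2*b2*b3*b4*b5)" by simp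
  ultimately show ?thesis by (rule eq_add_pos)
qed

lemma case_zzsz:
  fixes a :: "nat \<Rightarrow> nat"
  assumes "a 0 = 0" "a 1 = 0" "a 2 = Suc b2" "a 3 = Suc b3" "a 4 = Suc b4" "a 5 = 0"
  shows "(9*(a 0+a 1+a 2+a 3+a 4+a 5)+15)*cntA a < totA a * (3*(a 0+a 1+a 2+a 3+a 4+a 5)+7)"
proof -
  have s1: "a (Suc 0) = 0" using assms(2) by simp
  have "totA a * (3*(a 0+a 1+a 2+a 3+a 4+a 5)+7) = (9*(a 0+a 1+a 2+a 3+a 4+a 5)+15)*cntA a + (100 + 77*b4 + 6*b4*b4 + 71*b3 + 46*b3*b4 + 3*b3*b4*b4 + 6*b3*b3 + 3*b3*b3*b4 + 75*b2 + 59*b2*b4 + 6*b2*b4*b4 + 59*b2*b3 + 37*b2*b3*b4 + 3*b2*b3*b4*b4 + 6*b2*b3*b3 + 3*b2*b3*b3*b4 + 9*b2*b2 + 6*b2*b2*b4 + 6*b2*b2*b3 + 3*b2*b2*b3*b4)"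
    unfolding cntA_def totA_def NV_def
    apply (simp add: validV_def wV_def kV_def fac_def ind_def H_edges_def assms s1)
    by algebra
  moreover have "0 < (100 + 77*b4 + 6*b4*b4 + 71*b3 + 46*b3*b4 + 3*b3*b4*b4 + 6*b3*b3 + 3*b3*b3*b4 + 75*b2 + 59*b2*b4 + 6*b2*b4*b4 + 59*b2*b3 + 37*b2*b3*b4 + 3*b2*b3*b4*b4 + 6*b2*b3*b3 + 3*b2*b3*b3*b4 + 9*b2*b2 + 6*b2*b2*b4 + 6*b2*b2*b3 + 3*b2*b2*b3*b4)" by simp
  ultimately show ?thesis by (rule eq_add_pos)
qed

lemma case_zzzs:
  fixes a :: "nat \<Rightarrow> nat"
  assumes "a 0 = 0" "a 1 = 0" "a 2 = Suc b2" "a 3 = Suc b3" "a 4 = 0" "a 5 = Suc b5"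
  shows "(9*(a 0+a 1+a 2+a 3+a 4+a 5)+15)*cntA a < totA a * (3*(a 0+a 1+a 2+a 3+a 4+a 5)+7)"
proof -
  have s1: "a (Suc 0) = 0" using assms(2) by simp
  have "totA a * (3*(a 0+a 1+a 2+a 3+a 4+a 5)+7) = (9*(a 0+a 1+a 2+a 3+a 4+a 5)+15)*cntA a + (100 + 77*b5 + 6*b5*b5 + 71*b3 + 46*b3*b5 + 3*b3*b5*b5 + 6*b3*b3 + 3*b3*b3*b5 + 75*b2 + 59*b2*b5 + 6*b2*b5*b5 + 59*b2*b3 + 37*b2*b3*b5 + 3*b2*b3*b5*b5 + 6*b2*b3*b3 + 3*b2*b3*b3*b5 + 9*b2*b2 + 6*b2*b2*b5 + 6*b2*b2*b3 + 3*b2*b2*b3*b5)"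
    unfolding cntA_def totA_def NV_def
    apply (simp add: validV_def wV_def kV_def fac_def ind_def H_edges_def assms s1)
    by algebra
  moreover have "0 < (100 + 77*b5 + 6*b5*b5 + 71*b3 + 46*b3*b5 + 3*b3*b5*b5 + 6*b3*b3 + 3*b3*b3*b5 + 75*b2 + 59*b2*b5 + 6*b2*b5*b5 + 59*b2*b3 + 37*b2*b3*b5 + 3*b2*b3*b5*b5 + 6*b2*b3*b3 + 3*b2*b3*b3*b5 + 9*b2*b2 + 6*b2*b2*b5 + 6*b2*b2*b3 + 3*b2*b2*b3*b5)" by simp
  ultimately show ?thesis by (rule eq_add_pos)
qed

lemma case_zzzz:
  fixes a :: "nat \<Rightarrow> nat"
  assumes "a 0 = 0" "a 1 = 0" "a 2 = Suc b2" "a 3 = Suc b3" "a 4 = 0" "a 5 = 0"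
  shows "(9*(a 0+a 1+a 2+a 3+a 4+a 5)+15)*cntA a < totA a * (3*(a 0+a 1+a 2+a 3+a 4+a 5)+7)"
proof -
  have s1: "a (Suc 0) = 0" using assms(2) by simp
  have "totA a * (3*(a 0+a 1+a 2+a 3+a 4+a 5)+7) = (9*(a 0+a 1+a 2+a 3+a 4+a 5)+15)*cntA a + (21 + 22*b3 + 3*b3*b3 + 22*b2 + 25*b2*b3 + 3*b2*b3*b3 + 3*b2*b2 + 3*b2*b2*b3)"
    unfolding cntA_def totA_def NV_def
    apply (simp add: validV_def wV_def kV_def fac_def ind_def H_edges_def assms s1)
    by algebra
  moreover have "0 < (21 + 22*b3 + 3*b3*b3 + 22*b2 + 25*b2*b3 + 3*b2*b3*b3 + 3*b2*b2 + 3*b2*b2*b3)" by simp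
  ultimately show ?thesis by (rule eq_add_pos)
qed

lemma key:
  fixes a :: "nat \<Rightarrow> nat"
  assumes "a 2 = Suc b2" "a 3 = Suc b3"
  shows "(9*(a 0+a 1+a 2+a 3+a 4+a 5)+15)*cntA a < totA a * (3*(a 0+a 1+a 2+a 3+a 4+a 5)+7)"
proof (cases "a 0")
  case 0 note h0 = this
  show ?thesis proof (cases "a 1")
    case 0 note h1 = this
    show ?thesis proof (cases "a 4")
      case 0 note h4 = this
      show ?thesis proof (cases "a 5")
        case 0 note h5 = this
        show ?thesis by (rule case_zzzz[OF h0 h1 assms(1) assms(2) h4 h5])
      next
        case (Suc b5) note h5 = this
        show ?thesis by (rule case_zzzs[OF h0 h1 assms(1) assms(2) h4 h5])
      qed
    next
      case (Suc b4) note h4 = this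
      show ?thesis proof (cases "a 5")
        case 0 note h5 = this
        show ?thesis by (rule case_zzsz[OF h0 h1 assms(1) assms(2) h4 h5])
      next
        case (Suc b5) note h5 = this
        show ?thesis by (rule case_zzss[OF h0 h1 assms(1) assms(2) h4 h5])
      qed
    qed
  next
    case (Suc b1) note h1 = this
    show ?thesis proof (cases "a 4")
      case 0 note h4 = this
      show ?thesis proof (cases "a 5")
        case 0 note h5 = this
        show ?thesis by (rule case_zszz[OF h0 h1 assms(1) assms(2) h4 h5])
      next
        case (Suc b5) note h5 = this
        show ?thesis by (rule case_zszs[OF h0 h1 assms(1) assms(2) h4 h5])
      qed
    next
      case (Suc b4) note h4 = this
      show ?thesis proof (cases "a 5")
        case 0 note h5 = this
        show ?thesis by (rule case_zssz[OF h0 h1 assms(1) assms(2) h4 h5])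
      next
        case (Suc b5) note h5 = this
        show ?thesis by (rule case_zsss[OF h0 h1 assms(1) assms(2) h4 h5])
      qed
    qed
  qed
next
  case (Suc b0) note h0 = this
  show ?thesis proof (cases "a 1")
    case 0 note h1 = this
    show ?thesis proof (cases "a 4")
      case 0 note h4 = this
      show ?thesis proof (cases "a 5")
        case 0 note h5 = this
        show ?thesis by (rule case_szzz[OF h0 h1 assms(1) assms(2) h4 h5])
      next
        case (Suc b5) note h5 = this
        show ?thesis by (rule case_szzs[OF h0 h1 assms(1) assms(2) h4 h5])
      qed
    next
      case (Suc b4) note h4 = this
      show ?thesis proof (cases "a 5")
        case 0 note h5 = this
        show ?thesis by (rule case_szsz[OF h0 h1 assms(1) assms(2) h4 h5])
      next
        case (Suc b5) note h5 = this
        show ?thesis by (rule case_szss[OF h0 h1 assms(1) assms(2) h4 h5])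
      qed
    qed
  next
    case (Suc b1) note h1 = this
    show ?thesis proof (cases "a 4")
      case 0 note h4 = this
      show ?thesis proof (cases "a 5")
        case 0 note h5 = this
        show ?thesis by (rule case_sszz[OF h0 h1 assms(1) assms(2) h4 h5])
      next
        case (Suc b5) note h5 = this
        show ?thesis by (rule case_sszs[OF h0 h1 assms(1) assms(2) h4 h5])
      qed
    next
      case (Suc b4) note h4 = this
      show ?thesis proof (cases "a 5")
        case 0 note h5 = this
        show ?thesis by (rule case_sssz[OF h0 h1 assms(1) assms(2) h4 h5])
      next
        case (Suc b5) note h5 = this
        show ?thesis by (rule case_ssss[OF h0 h1 assms(1) assms(2) h4 h5])
      qed
    qed
  qed
qed

lemma cnt_pos: "0 < cntA a"
proof -
  define F where "F = (\<lambda>(c::nat, V::nat set). if validV a V then wV a V else 0)"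
  define p where "p = (3::nat, {0,1,2,3,4,5::nat})"
  have mem: "p \<in> set NV" unfolding NV_def p_def by simp
  have "F p \<in> set (map F NV)" using mem by simp
  hence le: "F p \<le> cntA a" unfolding cntA_def F_def by (rule member_le_sum_list) simp
  have "F p = 1"
    unfolding F_def p_def by (simp add: validV_def wV_def fac_def H_edges_def)
  then show ?thesis using le by simp
qed

lemma T_vals:
  fixes a :: "nat \<Rightarrow> nat"
  assumes "a 0 = 0" "a 1 = 0" "a 2 = Suc b" "a 3 = 0" "a 4 = 0" "a 5 = 0"
  shows "cntA a = 3 * Suc b + 7 \<and> totA a = 9 * Suc b + 15"
proof -
  have s1: "a (Suc 0) = 0" using assms(2) by simp
  show ?thesis unfolding cntA_def totA_def NV_def
    by (simp add: validV_def wV_def kV_def fac_def ind_def H_edges_def assms s1)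
qed

lemma avm_eq:
  assumes "\<forall>i\<in>{6..<n}. f i < 6"
  shows "avm (pendant_graph n f) = real (totA (\<lambda>j. card (Lf n f j))) / real (cntA (\<lambda>j. card (Lf n f j)))"
  unfolding avm_def count_final[OF assms] sum_final[OF assms, symmetric] by simp

lemma sum_a:
  assumes fr: "\<forall>i\<in>{6..<n}. f i < 6"
  shows "card (Lf n f 0) + card (Lf n f 1) + card (Lf n f 2) + card (Lf n f 3) + card (Lf n f 4) + card (Lf n f 5) = n - 6"
proof -
  have U: "{6..<n} = (\<Union>j\<in>{0..<6}. Lf n f j)" using fr unfolding Lf_def by auto
  have "card {6..<n} = (\<Sum>j\<in>{0..<6}. card (Lf n f j))" unfolding U
    by (rule card_UN_disjoint) (auto simp: Lf_def)
  then show ?thesis unfolding six by (simp add: add.assoc)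
qed

theorem lemma4p3:
  fixes n :: nat and f :: "nat \<Rightarrow> nat"
  assumes "n \<ge> 7"
    and "\<forall>i\<in>{6..<n}. f i \<in> {0..5}"
    and "\<exists>i\<in>{6..<n}. f i = 2"
    and "\<exists>i\<in>{6..<n}. f i = 3"
  shows "avm (pendant_graph n f) > avm (T1_33 n)"
proof -
  have fr: "\<forall>i\<in>{6..<n}. f i < 6" using assms(2) by auto
  have frT: "\<forall>i\<in>{6..<n}. (\<lambda>_. 2::nat) i < 6" by simp
  define a where "a = (\<lambda>j. card (Lf n f j))"
  define aT where "aT = (\<lambda>j. card (Lf n (\<lambda>_. 2) j))"
  have avmG: "avm (pendant_graph n f) = real (totA a) / real (cntA a)"
    using avm_eq[OF fr] a_def by simp
  have avmT: "avm (T1_33 n) = real (totA aT) / real (cntA aT)"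
    using avm_eq[OF frT] aT_def unfolding T1_33_def by simp
  define k where "k = n - 7"
  have nk: "n - 6 = Suc k" using assms(1) k_def by simp
  have LT2: "Lf n (\<lambda>_. 2) 2 = {6..<n}" unfolding Lf_def by auto
  have LT0: "j \<noteq> 2 \<Longrightarrow> Lf n (\<lambda>_. 2) j = {}" for j unfolding Lf_def by auto
  have "aT 0 = 0" "aT 1 = 0" "aT 2 = Suc k" "aT 3 = 0" "aT 4 = 0" "aT 5 = 0"
    unfolding aT_def using LT2 LT0 nk by auto
  from T_vals[OF this] have cT: "cntA aT = 3 * Suc k + 7" and tT: "totA aT = 9 * Suc k + 15" by auto
  have finL: "finite (Lf n f j)" for j unfolding Lf_def by auto
  obtain i2 where "i2 \<in> {6..<n}" "f i2 = 2" using assms(3) by auto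
  then have "i2 \<in> Lf n f 2" unfolding Lf_def by auto
  then have "a 2 \<noteq> 0" unfolding a_def using finL[of 2] by (metis card_0_eq empty_iff)
  then obtain b2 where b2: "a 2 = Suc b2" using not0_implies_Suc by blast
  obtain i3 where "i3 \<in> {6..<n}" "f i3 = 3" using assms(4) by auto
  then have "i3 \<in> Lf n f 3" unfolding Lf_def by auto
  then have "a 3 \<noteq> 0" unfolding a_def using finL[of 3] by (metis card_0_eq empty_iff)
  then obtain b3 where b3: "a 3 = Suc b3" using not0_implies_Suc by blast
  have S: "a 0 + a 1 + a 2 + a 3 + a 4 + a 5 = Suc k" using sum_a[OF fr] nk unfolding a_def by simp
  have K: "(9 * Suc k + 15) * cntA a < totA a * (3 * Suc k + 7)"
    using key[OF b2 b3] unfolding S .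
  have K': "totA aT * cntA a < totA a * cntA aT" using K cT tT by (simp add: mult.commute)
  have pos: "0 < cntA a" "0 < cntA aT" using cnt_pos by auto
  have "real (totA aT) * real (cntA a) < real (totA a) * real (cntA aT)"
    using K' by (metis of_nat_less_iff of_nat_mult)
  then have "real (totA aT) / real (cntA aT) < real (totA a) / real (cntA a)"
    using pos by (simp add: divide_simps)
  then show ?thesis using avmG avmT by simp
qed

end
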